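(* Suppose $T\subseteq 2^{<\omega}$ is a perfect tree such that $[T]$ is Turing independent. Then there is a Borel function $h_T\colon(2^\omega)^\omega\to 2^\omega$ such that for every sequence $\bar x=\langle x_n\rangle_{n\in\mathbb N}$ of elements of $[T]$, $h_T(\bar x)$ computes every $x_n$ but does not compute any element of $[T]$ other than the $x_n$'s.
   Context: A tree $T\subseteq 2^{<\omega}$ is perfect if every node of $T$ has two incomparable descendants in $T$; $[T]$ denotes the set of infinite paths through $T$. A set $A\subseteq 2^\omega$ is Turing independent if no finite subset of $A$ computes (via the join $\oplus$) any element of $A$ outside that subset. $(2^\omega)^\omega$ carries the product topology. *)

theory Defs
  imports "HOL-Analysis.Analysis" "HOL-Library.Sublist"
begin

text \<open>Cantor space 2^omega is the type nat => bool; its topology is the product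
of discrete bool (library instance), and (2^omega)^omega is nat => nat => bool
with the product topology (library instance in Function_Topology).\<close>

text \<open>An n-ary function is
represented as a map on nat lists; only its values on lists of length n matter.\<close>

inductive rec_in :: "(nat \<Rightarrow> nat) \<Rightarrow> nat \<Rightarrow> (nat list \<Rightarrow> nat) \<Rightarrow> bool"
  for g :: "nat \<Rightarrow> nat" where
  zero: "rec_in g n (\<lambda>_. 0)"
| succ: "rec_in g 1 (\<lambda>xs. Suc (hd xs))"
| proj: "i < n \<Longrightarrow> rec_in g n (\<lambda>xs. xs ! i)"
| orac: "rec_in g 1 (\<lambda>xs. g (hd xs))"
| comp: "rec_in g m h \<Longrightarrow> length fs = m \<Longrightarrow> (\<forall>f\<in>set fs. rec_in g n f)
          \<Longrightarrow> rec_in g n (\<lambda>xs. h (map (\<lambda>f. f xs) fs))"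
| prim_rec: "rec_in g n b \<Longrightarrow> rec_in g (n + 2) s
          \<Longrightarrow> rec_in g (n + 1) (\<lambda>xs. rec_nat (b (tl xs)) (\<lambda>k r. s (k # r # tl xs)) (hd xs))"
| minim: "rec_in g (n + 1) f \<Longrightarrow> (\<forall>xs. length xs = n \<longrightarrow> (\<exists>y. f (y # xs) = 0))
          \<Longrightarrow> rec_in g n (\<lambda>xs. LEAST y. f (y # xs) = 0)"

definition turing_le :: "(nat \<Rightarrow> bool) \<Rightarrow> (nat \<Rightarrow> bool) \<Rightarrow> bool" where
  "turing_le y x \<longleftrightarrow>
     (\<exists>f. rec_in (\<lambda>n. of_bool (x n)) 1 f \<and> (\<forall>n. f [n] = of_bool (y n)))"

definition join :: "(nat \<Rightarrow> bool) \<Rightarrow> (nat \<Rightarrow> bool) \<Rightarrow> (nat \<Rightarrow> bool)" where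
  "join x y = (\<lambda>n. if even n then x (n div 2) else y (n div 2))"

fun join_list :: "(nat \<Rightarrow> bool) list \<Rightarrow> (nat \<Rightarrow> bool)" where
  "join_list [] = (\<lambda>_. False)"
| "join_list (x # xs) = join x (join_list xs)"

text \<open>Join of a finite set (via some enumeration; the Turing degree does not depend on it).\<close>
definition join_set :: "(nat \<Rightarrow> bool) set \<Rightarrow> (nat \<Rightarrow> bool)" where
  "join_set F = join_list (SOME xs. set xs = F \<and> distinct xs)"

definition turing_independent :: "(nat \<Rightarrow> bool) set \<Rightarrow> bool" where
  "turing_independent A \<longleftrightarrow>
     (\<forall>F. finite F \<and> F \<subseteq> A \<longrightarrow> (\<forall>y \<in> A - F. \<not> turing_le y (join_set F)))"

definition is_tree :: "bool list set \<Rightarrow> bool" where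
  "is_tree T \<longleftrightarrow> (\<forall>s t. t \<in> T \<and> prefix s t \<longrightarrow> s \<in> T)"

definition perfect_tree :: "bool list set \<Rightarrow> bool" where
  "perfect_tree T \<longleftrightarrow> is_tree T \<and>
     (\<forall>\<sigma>\<in>T. \<exists>s\<in>T. \<exists>t\<in>T. prefix \<sigma> s \<and> prefix \<sigma> t \<and> \<not> prefix s t \<and> \<not> prefix t s)"

definition paths :: "bool list set \<Rightarrow> (nat \<Rightarrow> bool) set" where
  "paths T = {x. \<forall>n. map x [0..<n] \<in> T}"

end

theory Submission
  imports Defs
begin


definition rf :: "(nat \<Rightarrow> nat) \<Rightarrow> nat \<Rightarrow> (nat list \<Rightarrow> nat) \<Rightarrow> bool" where
  "rf g n F \<longleftrightarrow> (\<exists>f. rec_in g n f \<and> (\<forall>xs. length xs = n \<longrightarrow> f xs = F xs))"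

lemma rf_cong: "rf g n F \<Longrightarrow> (\<And>xs. length xs = n \<Longrightarrow> F xs = G xs) \<Longrightarrow> rf g n G"
  unfolding rf_def by metis

lemma reps_exist:
  assumes "\<forall>F\<in>set Fs. rf g n F"
  shows "\<exists>fs. length fs = length Fs \<and> (\<forall>f\<in>set fs. rec_in g n f) \<and>
     (\<forall>xs. length xs = n \<longrightarrow> map (\<lambda>f. f xs) fs = map (\<lambda>F. F xs) Fs)"
  using assms
proof (induction Fs)
  case Nil
  then show ?case by auto
next
  case (Cons F Fs)
  then obtain fs where fs: "length fs = length Fs" "\<forall>f\<in>set fs. rec_in g n f"
     "\<forall>xs. length xs = n \<longrightarrow> map (\<lambda>f. f xs) fs = map (\<lambda>F. F xs) Fs" by auto
  from Cons.prems obtain f where f: "rec_in g n f" "\<forall>xs. length xs = n \<longrightarrow> f xs = F xs"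
    unfolding rf_def by auto
  show ?case using fs f by (intro exI[of _ "f # fs"]) auto
qed

lemma rf_comp:
  assumes "rf g m H" "length Fs = m" "\<forall>F\<in>set Fs. rf g n F"
  shows "rf g n (\<lambda>xs. H (map (\<lambda>F. F xs) Fs))"
proof -
  obtain h where h: "rec_in g m h" "\<forall>xs. length xs = m \<longrightarrow> h xs = H xs"
    using assms(1) unfolding rf_def by auto
  obtain fs where fs: "length fs = length Fs" "\<forall>f\<in>set fs. rec_in g n f"
     "\<forall>xs. length xs = n \<longrightarrow> map (\<lambda>f. f xs) fs = map (\<lambda>F. F xs) Fs"
    using reps_exist[OF assms(3)] by auto
  have "rec_in g n (\<lambda>xs. h (map (\<lambda>f. f xs) fs))"
    by (rule rec_in.comp[OF h(1)]) (use fs assms(2) in auto)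
  moreover have "\<forall>xs. length xs = n \<longrightarrow> h (map (\<lambda>f. f xs) fs) = H (map (\<lambda>F. F xs) Fs)"
    using fs h assms(2) by auto
  ultimately show ?thesis unfolding rf_def by blast
qed

lemma rf_zero: "rf g n (\<lambda>_. 0)"
  unfolding rf_def by (auto intro: rec_in.zero)

lemma rf_succ1: "rf g 1 (\<lambda>xs. Suc (hd xs))"
  unfolding rf_def using rec_in.succ[of g] by blast

lemma rf_orac1: "rf g 1 (\<lambda>xs. g (hd xs))"
  unfolding rf_def using rec_in.orac[of g] by blast

lemma rf_proj: "i < n \<Longrightarrow> rf g n (\<lambda>xs. xs ! i)"
  unfolding rf_def by (auto intro: rec_in.proj)

lemma rf_comp1:
  assumes "rf g 1 H" "rf g n A"
  shows "rf g n (\<lambda>xs. H [A xs])"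
  using rf_comp[OF assms(1), of "[A]"] assms(2) by auto

lemma rf_comp2:
  assumes "rf g 2 H" "rf g n A" "rf g n B"
  shows "rf g n (\<lambda>xs. H [A xs, B xs])"
  using rf_comp[OF assms(1), of "[A,B]"] assms(2,3) by auto

lemma rf_comp3:
  assumes "rf g 3 H" "rf g n A" "rf g n B" "rf g n C"
  shows "rf g n (\<lambda>xs. H [A xs, B xs, C xs])"
  using rf_comp[OF assms(1), of "[A,B,C]"] assms(2-4) by auto

lemma rf_Suc: "rf g n A \<Longrightarrow> rf g n (\<lambda>xs. Suc (A xs))"
  using rf_comp1[OF rf_succ1] by auto

lemma rf_orac: "rf g n A \<Longrightarrow> rf g n (\<lambda>xs. g (A xs))"
  using rf_comp1[OF rf_orac1] by auto

lemma rf_const: "rf g n (\<lambda>_. c)"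
  by (induction c) (auto intro: rf_zero rf_Suc)

lemma map_nth_upt_eq: "length xs = n \<Longrightarrow> map (\<lambda>i. xs ! i) [0..<n] = xs"
  using map_nth[of xs] by simp

lemma rf_drop:
  assumes "rf g n A"
  shows "rf g (k + n) (\<lambda>ys. A (drop k ys))"
proof -
  have "rf g (k + n) (\<lambda>ys. A (map (\<lambda>F. F ys) (map (\<lambda>i ys. ys ! i) [k..<k+n])))"
    by (rule rf_comp[OF assms]) (auto intro: rf_proj)
  then show ?thesis
    by (rule rf_cong) (auto intro!: arg_cong[where f=A] nth_equalityI)
qed

lemma rf_recnat:
  assumes B: "rf g n B" and S: "rf g (Suc (Suc n)) S" and X: "rf g n X"
  shows "rf g n (\<lambda>xs. rec_nat (B xs) (\<lambda>k r. S (k # r # xs)) (X xs))"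
proof -
  obtain b where b: "rec_in g n b" "\<forall>xs. length xs = n \<longrightarrow> b xs = B xs"
    using B unfolding rf_def by auto
  obtain s where s: "rec_in g (n + 2) s" "\<forall>xs. length xs = n + 2 \<longrightarrow> s xs = S xs"
    using S unfolding rf_def by auto
  have P: "rf g (n+1) (\<lambda>xs. rec_nat (B (tl xs)) (\<lambda>k r. S (k # r # tl xs)) (hd xs))"
  proof -
    have "rec_in g (n + 1) (\<lambda>xs. rec_nat (b (tl xs)) (\<lambda>k r. s (k # r # tl xs)) (hd xs))"
      by (rule rec_in.prim_rec[OF b(1) s(1)])
    moreover have "\<forall>xs. length xs = n + 1 \<longrightarrow>
       rec_nat (b (tl xs)) (\<lambda>k r. s (k # r # tl xs)) (hd xs) =
       rec_nat (B (tl xs)) (\<lambda>k r. S (k # r # tl xs)) (hd xs)"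
      using b s by auto
    ultimately show ?thesis unfolding rf_def by blast
  qed
  have "rf g n (\<lambda>xs. (\<lambda>ys. rec_nat (B (tl ys)) (\<lambda>k r. S (k # r # tl ys)) (hd ys))
            (map (\<lambda>F. F xs) (X # map (\<lambda>i ys. ys ! i) [0..<n])))"
    by (rule rf_comp[OF P]) (auto intro: rf_proj X)
  then show ?thesis
    by (rule rf_cong) (simp add: map_nth_upt_eq comp_def)
qed

lemma rf_least:
  assumes F: "rf g (Suc n) F" and reg: "\<And>xs. length xs = n \<Longrightarrow> \<exists>y. F (y # xs) = 0"
  shows "rf g n (\<lambda>xs. LEAST y. F (y # xs) = 0)"
proof -
  obtain f where f: "rec_in g (n+1) f" "\<forall>xs. length xs = n + 1 \<longrightarrow> f xs = F xs"
    using F unfolding rf_def by auto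
  have "rec_in g n (\<lambda>xs. LEAST y. f (y # xs) = 0)"
    by (rule rec_in.minim[OF f(1)]) (use f reg in auto)
  moreover have "\<forall>xs. length xs = n \<longrightarrow> (LEAST y. f (y # xs) = 0) = (LEAST y. F (y # xs) = 0)"
    using f by auto
  ultimately show ?thesis unfolding rf_def by blast
qed

lemma rf_drop2: "rf g n A \<Longrightarrow> rf g (Suc (Suc n)) (\<lambda>ys. A (drop 2 ys))"
  using rf_drop[of g n A 2] by simp

lemma rf_add: "rf g n A \<Longrightarrow> rf g n B \<Longrightarrow> rf g n (\<lambda>xs. A xs + B xs)"
proof -
  assume A: "rf g n A" and B: "rf g n B"
  have "rf g n (\<lambda>xs. rec_nat (A xs) (\<lambda>k r. (\<lambda>ys. Suc (ys ! 1)) (k # r # xs)) (B xs))"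
    by (rule rf_recnat[OF A _ B]) (auto intro: rf_Suc rf_proj)
  moreover have "rec_nat a (\<lambda>k r. Suc r) b = a + b" for a b :: nat by (induction b) auto
  ultimately show ?thesis by (simp add: add.commute)
qed

lemma rf_mult: "rf g n A \<Longrightarrow> rf g n B \<Longrightarrow> rf g n (\<lambda>xs. A xs * B xs)"
proof -
  assume A: "rf g n A" and B: "rf g n B"
  have "rf g n (\<lambda>xs. rec_nat 0 (\<lambda>k r. (\<lambda>ys. ys ! 1 + A (drop 2 ys)) (k # r # xs)) (B xs))"
    by (rule rf_recnat[OF rf_const _ B]) (auto intro!: rf_add rf_proj rf_drop2 A)
  moreover have "rec_nat 0 (\<lambda>k r. r + a) b = a * b" for a b :: nat by (induction b) auto
  ultimately show ?thesis by simp
qed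

lemma rf_pred: "rf g n A \<Longrightarrow> rf g n (\<lambda>xs. A xs - 1)"
proof -
  assume A: "rf g n A"
  have "rf g n (\<lambda>xs. rec_nat 0 (\<lambda>k r. (\<lambda>ys. ys ! 0) (k # r # xs)) (A xs))"
    by (rule rf_recnat[OF rf_const _ A]) (auto intro: rf_proj)
  moreover have "rec_nat 0 (\<lambda>k r. k) b = b - 1" for b :: nat by (induction b) auto
  ultimately show ?thesis by simp
qed

lemma rf_diff: "rf g n A \<Longrightarrow> rf g n B \<Longrightarrow> rf g n (\<lambda>xs. A xs - B xs)"
proof -
  assume A: "rf g n A" and B: "rf g n B"
  have "rf g n (\<lambda>xs. rec_nat (A xs) (\<lambda>k r. (\<lambda>ys. ys ! 1 - 1) (k # r # xs)) (B xs))"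
    by (rule rf_recnat[OF A _ B]) (rule rf_pred, rule rf_proj, simp)
  moreover have "rec_nat a (\<lambda>k r. r - 1) b = a - b" for a b :: nat by (induction b) auto
  ultimately show ?thesis by simp
qed

lemma rf_ifz: "rf g n C \<Longrightarrow> rf g n A \<Longrightarrow> rf g n B \<Longrightarrow> rf g n (\<lambda>xs. if C xs = 0 then A xs else B xs)"
proof -
  assume A: "rf g n A" and B: "rf g n B" and C: "rf g n C"
  have "rf g n (\<lambda>xs. rec_nat (A xs) (\<lambda>k r. (\<lambda>ys. B (drop 2 ys)) (k # r # xs)) (C xs))"
    by (rule rf_recnat[OF A _ C]) (auto intro: rf_drop2 B)
  moreover have "rec_nat a (\<lambda>k r. b) c = (if c = 0 then a else b)" for a b c :: nat by (cases c) auto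
  ultimately show ?thesis by simp
qed

definition rp :: "(nat \<Rightarrow> nat) \<Rightarrow> nat \<Rightarrow> (nat list \<Rightarrow> bool) \<Rightarrow> bool" where
  "rp g n P \<longleftrightarrow> rf g n (\<lambda>xs. of_bool (P xs))"

lemma rf_if: "rp g n P \<Longrightarrow> rf g n A \<Longrightarrow> rf g n B \<Longrightarrow> rf g n (\<lambda>xs. if P xs then A xs else B xs)"
  unfolding rp_def by (rule rf_cong[OF rf_ifz[of g n _ B A]]) auto

lemma rp_le: "rf g n A \<Longrightarrow> rf g n B \<Longrightarrow> rp g n (\<lambda>xs. A xs \<le> B xs)"
  unfolding rp_def by (rule rf_cong[OF rf_ifz[OF rf_diff, of g n A B "\<lambda>_. 1" "\<lambda>_. 0"]]) (auto intro: rf_const)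

lemma rp_less: "rf g n A \<Longrightarrow> rf g n B \<Longrightarrow> rp g n (\<lambda>xs. A xs < B xs)"
  using rp_le[of g n "\<lambda>xs. Suc (A xs)" B] by (auto intro: rf_Suc simp: Suc_le_eq)

lemma rp_not: "rp g n P \<Longrightarrow> rp g n (\<lambda>xs. \<not> P xs)"
  unfolding rp_def by (rule rf_cong[OF rf_ifz[of g n _ "\<lambda>_. 1" "\<lambda>_. 0"]]) (auto intro: rf_const)

lemma rp_conj: "rp g n P \<Longrightarrow> rp g n Q \<Longrightarrow> rp g n (\<lambda>xs. P xs \<and> Q xs)"
  unfolding rp_def by (rule rf_cong[OF rf_mult[of g n "\<lambda>xs. of_bool (P xs)" "\<lambda>xs. of_bool (Q xs)"]]) auto

lemma rp_disj: "rp g n P \<Longrightarrow> rp g n Q \<Longrightarrow> rp g n (\<lambda>xs. P xs \<or> Q xs)"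
  using rp_not[of g n "\<lambda>xs. \<not> P xs \<and> \<not> Q xs"] rp_conj[OF rp_not rp_not] by auto

lemma rp_cong: "rp g n P \<Longrightarrow> (\<And>xs. length xs = n \<Longrightarrow> P xs = Q xs) \<Longrightarrow> rp g n Q"
  unfolding rp_def by (rule rf_cong[of g n "\<lambda>xs. of_bool (P xs)"]) auto

lemma rp_eq: "rf g n A \<Longrightarrow> rf g n B \<Longrightarrow> rp g n (\<lambda>xs. A xs = B xs)"
  by (rule rp_cong[OF rp_conj[OF rp_le rp_le, of g n A B B A]]) auto

lemma rp_const: "rp g n (\<lambda>_. b)"
  unfolding rp_def by (rule rf_const)

lemma rf_of_bool: "rp g n P \<Longrightarrow> rf g n (\<lambda>xs. of_bool (P xs))"
  unfolding rp_def .

lemma rp_nonzero: "rf g n A \<Longrightarrow> rp g n (\<lambda>xs. A xs \<noteq> 0)"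
  by (intro rp_not rp_eq rf_const)

lemma rf_least_pred:
  assumes P: "rp g (Suc n) P" and reg: "\<And>xs. length xs = n \<Longrightarrow> \<exists>y. P (y # xs)"
  shows "rf g n (\<lambda>xs. LEAST y. P (y # xs))"
proof -
  have "rf g n (\<lambda>xs. LEAST y. (\<lambda>ys. if P ys then 0 else 1::nat) (y # xs) = 0)"
    by (rule rf_least[of g n "\<lambda>ys. if P ys then 0 else 1"]) (use reg in \<open>auto intro!: rf_if P rf_const\<close>)
  then show ?thesis by (simp add: if_split_eq1 cong: if_cong) 
qed


lemma lift2:
  assumes "rf g 2 (\<lambda>xs. f (xs ! 0) (xs ! 1))" "rf g n A" "rf g n B"
  shows "rf g n (\<lambda>xs. f (A xs) (B xs))"
  using rf_comp2[OF assms] by simp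

lemma lift1:
  assumes "rf g 1 (\<lambda>xs. f (xs ! 0))" "rf g n A"
  shows "rf g n (\<lambda>xs. f (A xs))"
  using rf_comp1[OF assms] by simp



lemma least_div: "(b::nat) > 0 \<Longrightarrow> (LEAST q. a < b * (q + 1) \<or> a \<le> q) = a div b"
proof (rule Least_equality)
  assume "b > 0"
  show "a < b * (a div b + 1) \<or> a \<le> a div b"
  proof -
    have "a = b * (a div b) + a mod b" by simp
    moreover have "a mod b < b" using \<open>b > 0\<close> by simp
    ultimately have "a < b * (a div b) + b" by linarith
    then show ?thesis by (simp add: algebra_simps)
  qed
  fix y assume "a < b * (y + 1) \<or> a \<le> y"
  then show "a div b \<le> y"
  proof
    assume "a < b * (y + 1)"
    then show ?thesis using \<open>b > 0\<close>
      by (metis Suc_eq_plus1 div_less_iff_less_mult less_Suc_eq_le mult.commute)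
  next
    assume "a \<le> y" then show ?thesis by (meson div_le_dividend le_trans)
  qed
qed

lemma rf_div2: "rf g 2 (\<lambda>xs. xs ! 0 div xs ! 1)"
proof -
  have L: "rf g 2 (\<lambda>xs. LEAST q. (\<lambda>ys. ys ! 1 < ys ! 2 * (ys ! 0 + 1) \<or> ys ! 1 \<le> ys ! 0) (q # xs))"
  proof (rule rf_least_pred)
    show "rp g (Suc 2) (\<lambda>ys. ys ! 1 < ys ! 2 * (ys ! 0 + 1) \<or> ys ! 1 \<le> ys ! 0)"
      by (intro rp_disj rp_less rp_le rf_mult rf_add rf_proj rf_const) auto
    fix xs :: "nat list"
    show "\<exists>y. (y # xs) ! 1 < (y # xs) ! 2 * ((y # xs) ! 0 + 1) \<or> (y # xs) ! 1 \<le> (y # xs) ! 0"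
      by (intro exI[of _ "xs ! 0"]) simp
  qed
  have "rf g 2 (\<lambda>xs. if xs ! 1 = 0 then 0 else LEAST q. (\<lambda>ys. ys ! 1 < ys ! 2 * (ys ! 0 + 1) \<or> ys ! 1 \<le> ys ! 0) (q # xs))"
    by (intro rf_if rp_eq rf_proj rf_const L) auto
  then show ?thesis
  proof (rule rf_cong)
    fix xs :: "nat list"
    show "(if xs ! 1 = 0 then 0 else LEAST q. (\<lambda>ys. ys ! 1 < ys ! 2 * (ys ! 0 + 1) \<or> ys ! 1 \<le> ys ! 0) (q # xs)) = xs ! 0 div xs ! 1"
      using least_div[of "xs ! 1" "xs ! 0"] by auto
  qed
qed

lemma rf_div: "rf g n A \<Longrightarrow> rf g n B \<Longrightarrow> rf g n (\<lambda>xs. A xs div B xs)"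
  by (rule lift2[OF rf_div2])

lemma rf_mod: "rf g n A \<Longrightarrow> rf g n B \<Longrightarrow> rf g n (\<lambda>xs. A xs mod B xs)"
proof -
  assume A: "rf g n A" and B: "rf g n B"
  have "rf g n (\<lambda>xs. A xs - B xs * (A xs div B xs))"
    by (intro rf_diff rf_mult rf_div A B)
  then show ?thesis by (rule rf_cong) (simp add: minus_div_mult_eq_mod[symmetric] mult.commute)
qed

lemma rf_pow2: "rf g n A \<Longrightarrow> rf g n (\<lambda>xs. 2 ^ A xs)"
proof -
  assume A: "rf g n A"
  have "rf g n (\<lambda>xs. rec_nat 1 (\<lambda>k r. (\<lambda>ys. ys ! 1 + ys ! 1) (k # r # xs)) (A xs))"
    by (rule rf_recnat[OF rf_const _ A]) (auto intro!: rf_add rf_proj)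
  moreover have "rec_nat 1 (\<lambda>k r. r + r) b = (2::nat) ^ b" for b by (induction b) auto
  ultimately show ?thesis by simp
qed



definition pos :: "nat \<Rightarrow> nat \<Rightarrow> nat" where
  "pos n k = 2 ^ n * (2 * k + 1) - 1"

definition pcol :: "nat \<Rightarrow> nat" where
  "pcol i = (LEAST n. (Suc i) mod 2 ^ (Suc n) \<noteq> 0)"

definition prow :: "nat \<Rightarrow> nat" where
  "prow i = (Suc i div 2 ^ pcol i - 1) div 2"

lemma pos_Suc: "Suc (pos n k) = 2 ^ n * (2 * k + 1)"
  unfolding pos_def by simp

lemma pcol_ex: "(Suc i) mod 2 ^ (Suc i) \<noteq> 0"
proof -
  have "Suc i < 2 ^ Suc i" by (metis less_exp)
  then show ?thesis by simp
qed

lemma pcol_le: "pcol i \<le> i"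
  unfolding pcol_def by (rule Least_le) (rule pcol_ex)

lemma dvd_pow2_odd: "odd (m::nat) \<Longrightarrow> 2 ^ j dvd 2 ^ n * m \<longleftrightarrow> j \<le> n"
proof
  assume o: "odd m" and d: "2 ^ j dvd 2 ^ n * m"
  show "j \<le> n"
  proof (rule ccontr)
    assume "\<not> j \<le> n"
    then have "(2::nat) ^ Suc n dvd 2 ^ j" by (intro le_imp_power_dvd) simp
    then have "2 ^ Suc n dvd 2 ^ n * m" using d dvd_trans by blast
    then have "2 dvd m" by simp
    with o show False by simp
  qed
next
  assume "j \<le> n" then show "2 ^ j dvd 2 ^ n * m" by (simp add: le_imp_power_dvd)
qed



lemma pcol_pos: "pcol (pos n k) = n"
  unfolding pcol_def pos_Suc
proof (rule Least_equality)
  show "2 ^ n * (2 * k + 1) mod 2 ^ Suc n \<noteq> 0"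
    using dvd_pow2_odd[of "2*k+1" "Suc n" n] by (simp add: dvd_eq_mod_eq_0)
  fix y assume "2 ^ n * (2 * k + 1) mod 2 ^ Suc y \<noteq> 0"
  then show "n \<le> y"
    using dvd_pow2_odd[of "2*k+1" "Suc y" n] by (auto simp: dvd_eq_mod_eq_0)
qed

lemma prow_pos: "prow (pos n k) = k"
  unfolding prow_def pcol_pos pos_Suc by simp

lemma pos_inj: "pos n k = pos n' k' \<longleftrightarrow> n = n' \<and> k = k'"
  by (metis pcol_pos prow_pos)

lemma pos2_decomp: "\<exists>n m. Suc i = 2 ^ n * m \<and> odd m"
proof (induction i rule: less_induct)
  case (less i)
  show ?case
  proof (cases "odd (Suc i)")
    case True then show ?thesis by (intro exI[of _ 0] exI[of _ "Suc i"]) auto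
  next
    case False
    then obtain j where j: "Suc i = 2 * Suc j" 
      by (metis dvd_def even_Suc nat.exhaust mult_0_right nat.distinct(1))
    then have "j < i" by simp
    with less obtain n m where "Suc j = 2 ^ n * m" "odd m" by blast
    then show ?thesis using j by (intro exI[of _ "Suc n"] exI[of _ m]) auto
  qed
qed

lemma pos_pcol_prow: "pos (pcol i) (prow i) = i"
proof -
  obtain n m where nm: "Suc i = 2 ^ n * m" "odd m" using pos2_decomp by blast
  then obtain k where k: "m = 2 * k + 1" by (metis oddE)
  then have "i = pos n k" using nm unfolding pos_def by simp
  then show ?thesis by (simp add: pcol_pos prow_pos)
qed

lemma prow_le: "prow i \<le> i"
proof -
  have "prow i \<le> Suc i div 2 ^ pcol i - 1" unfolding prow_def by (rule div_le_dividend)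
  moreover have "Suc i div 2 ^ pcol i \<le> Suc i" by (rule div_le_dividend)
  ultimately show ?thesis by linarith
qed

lemma pos_ge_k: "k \<le> pos n k"
proof -
  have "1 * (2 * k + 1) \<le> 2 ^ n * (2 * k + 1)" by (intro mult_le_mono1) simp
  then show ?thesis unfolding pos_def by simp
qed

lemma pos_ge_n: "n \<le> pos n k"
proof -
  have "n < 2 ^ n" by simp
  also have "2 ^ n \<le> 2 ^ n * (2 * k + 1)" by simp
  finally show ?thesis unfolding pos_def by simp
qed

lemma pos_mono_k: "k < k' \<Longrightarrow> pos n k < pos n k'"
proof -
  assume "k < k'"
  then have "2 ^ n * (2 * k + 1) < 2 ^ n * (2 * k' + 1)" by (intro mult_less_mono2) auto
  then have "Suc (pos n k) < Suc (pos n k')" unfolding pos_Suc .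
  then show ?thesis by simp
qed



lemma rf_pos: "rf g n A \<Longrightarrow> rf g n B \<Longrightarrow> rf g n (\<lambda>xs. pos (A xs) (B xs))"
  unfolding pos_def by (intro rf_diff rf_mult rf_pow2 rf_add rf_const) auto

lemma rf_pcol: "rf g n A \<Longrightarrow> rf g n (\<lambda>xs. pcol (A xs))"
proof -
  have "rf g 1 (\<lambda>xs. LEAST m. (\<lambda>ys. (Suc (ys ! 1)) mod 2 ^ (Suc (ys ! 0)) \<noteq> 0) (m # xs))"
  proof (rule rf_least_pred)
    show "rp g (Suc 1) (\<lambda>ys. (Suc (ys ! 1)) mod 2 ^ (Suc (ys ! 0)) \<noteq> 0)"
      by (intro rp_nonzero rf_mod rf_Suc rf_pow2 rf_proj) auto
    fix xs :: "nat list"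
    show "\<exists>y. Suc ((y # xs) ! 1) mod 2 ^ Suc ((y # xs) ! 0) \<noteq> 0"
      using pcol_ex[of "xs ! 0"] by (intro exI[of _ "xs ! 0"]) simp
  qed
  then have "rf g 1 (\<lambda>xs. pcol (xs ! 0))" unfolding pcol_def by simp
  then show "rf g n A \<Longrightarrow> rf g n (\<lambda>xs. pcol (A xs))" by (rule lift1)
qed

lemma rf_prow: "rf g n A \<Longrightarrow> rf g n (\<lambda>xs. prow (A xs))"
  unfolding prow_def by (intro rf_div rf_diff rf_Suc rf_pow2 rf_pcol rf_const)

lemma rp_odd_div: "rf g n A \<Longrightarrow> rf g n B \<Longrightarrow> rp g n (\<lambda>xs. odd (A xs div 2 ^ B xs))"
proof -
  assume A: "rf g n A" and B: "rf g n B"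
  have "rp g n (\<lambda>xs. A xs div 2 ^ B xs mod 2 = 1)"
    by (intro rp_eq rf_mod rf_div rf_pow2 rf_const A B)
  then show ?thesis by (rule rp_cong) (auto simp: odd_iff_mod_2_eq_one)
qed



lemma rf_fin1: 
  assumes "finite {x. f x \<noteq> 0}" "rf g n A"
  shows "rf g n (\<lambda>xs. f (A xs))"
proof -
  have "\<forall>f. {x. f x \<noteq> 0} \<subseteq> S \<longrightarrow> rf g n (\<lambda>xs. f (A xs))" if "finite S" for S
    using that
  proof (induction S rule: finite_induct)
    case empty
    then show ?case by (auto intro: rf_cong[OF rf_const[of g n 0]])
  next
    case (insert a S)
    show ?case
    proof (intro allI impI)
      fix f :: "nat \<Rightarrow> nat" assume f: "{x. f x \<noteq> 0} \<subseteq> insert a S"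
      have "{x. (f(a := 0)) x \<noteq> 0} \<subseteq> S" using f by auto
      then have "rf g n (\<lambda>xs. (f(a := 0)) (A xs))"
        using insert.IH by blast
      then have "rf g n (\<lambda>xs. (if A xs = a then f a else 0) + (f(a := 0)) (A xs))"
        by (intro rf_add rf_if rp_eq rf_const assms(2))
      then show "rf g n (\<lambda>xs. f (A xs))" by (rule rf_cong) auto
    qed
  qed
  then show ?thesis using assms(1) by blast
qed

lemma rf_fin2:
  assumes "finite {(a, b). f a b \<noteq> 0}" "rf g n A" "rf g n B"
  shows "rf g n (\<lambda>xs. f (A xs) (B xs))"
proof -
  let ?F = "\<lambda>j. f (pcol j) (prow j)"
  have "{j. ?F j \<noteq> 0} \<subseteq> (\<lambda>(a, b). pos a b) ` {(a, b). f a b \<noteq> 0}"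
  proof
    fix j assume "j \<in> {j. ?F j \<noteq> 0}"
    then show "j \<in> (\<lambda>(a, b). pos a b) ` {(a, b). f a b \<noteq> 0}"
      by (intro image_eqI[of _ _ "(pcol j, prow j)"]) (auto simp: pos_pcol_prow)
  qed
  then have fin: "finite {j. ?F j \<noteq> 0}" using assms(1) finite_subset by blast
  have "rf g n (\<lambda>xs. ?F (pos (A xs) (B xs)))" by (rule rf_fin1[OF fin rf_pos[OF assms(2,3)]])
  then show ?thesis by (simp add: pcol_pos prow_pos)
qed



datatype prog = Zero | Succ | Proj nat | Orac | Comp prog "prog list" | PRec prog prog | Min prog

definition mstep :: "nat \<Rightarrow> nat \<Rightarrow> nat option \<Rightarrow> nat" where
  "mstep st t e = (if st = 1 then (case e of None \<Rightarrow> 0 | Some 0 \<Rightarrow> t + 2 | Some _ \<Rightarrow> 1) else st)"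

definition mdec :: "nat \<Rightarrow> nat option" where
  "mdec st = (if 2 \<le> st then Some (st - 2) else None)"

definition msearch :: "(nat \<Rightarrow> nat option) \<Rightarrow> nat \<Rightarrow> nat" where
  "msearch E j = rec_nat 1 (\<lambda>t st. mstep st t (E t)) j"

fun ev :: "(nat \<Rightarrow> nat option) \<Rightarrow> nat \<Rightarrow> prog \<Rightarrow> nat list \<Rightarrow> nat option" where
  "ev Q s Zero xs = Some 0"
| "ev Q s Succ xs = Some (Suc (hd xs))"
| "ev Q s (Proj i) xs = Some (xs ! i)"
| "ev Q s Orac xs = Q (hd xs)"
| "ev Q s (Comp h fs) xs = (if None \<in> set (map (\<lambda>f. ev Q s f xs) fs) then None
      else ev Q s h (map (\<lambda>f. the (ev Q s f xs)) fs))"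
| "ev Q s (PRec b t) xs = rec_nat (ev Q s b (tl xs))
      (\<lambda>k r. case r of None \<Rightarrow> None | Some v \<Rightarrow> ev Q s t (k # v # tl xs)) (hd xs)"
| "ev Q s (Min f) xs = mdec (msearch (\<lambda>t. ev Q s f (t # xs)) s)"

lemma msearch_0[simp]: "msearch E 0 = 1" unfolding msearch_def by simp
lemma msearch_Suc: "msearch E (Suc j) = mstep (msearch E j) j (E j)" unfolding msearch_def by simp

definition posv :: "nat option \<Rightarrow> bool" where "posv e \<longleftrightarrow> (\<exists>v. e = Some (Suc v))"

lemma msearch_char:
  "(msearch E j = 1 \<longleftrightarrow> (\<forall>t<j. posv (E t))) \<and>
   (\<forall>y. msearch E j = y + 2 \<longleftrightarrow> (y < j \<and> E y = Some 0 \<and> (\<forall>t<y. posv (E t))))"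
proof (induction j)
  case 0
  then show ?case by auto
next
  case (Suc j)
  show ?case
  proof (cases "msearch E j = 1")
    case True
    then have all: "\<forall>t<j. posv (E t)" using Suc by simp
    have notfound: "\<forall>y. \<not> (y < j \<and> E y = Some 0)" using all by (auto simp: posv_def)
    show ?thesis
    proof (cases "E j")
      case None
      then show ?thesis using True all notfound
        by (auto simp: msearch_Suc mstep_def posv_def less_Suc_eq)
    next
      case (Some a)
      then show ?thesis using True all notfound
        by (cases a) (auto simp: msearch_Suc mstep_def posv_def less_Suc_eq)
    qed
  next
    case False
    then have "\<not> (\<forall>t<j. posv (E t))" using Suc by simp
    then show ?thesis using False Suc
      by (auto simp: msearch_Suc mstep_def less_Suc_eq)
  qed
qed

lemma ev_Min_Some:
  "ev Q s (Min f) xs = Some y \<longleftrightarrow>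
     (y < s \<and> ev Q s f (y # xs) = Some 0 \<and> (\<forall>t<y. posv (ev Q s f (t # xs))))"
proof -
  have "ev Q s (Min f) xs = Some y \<longleftrightarrow> msearch (\<lambda>t. ev Q s f (t # xs)) s = y + 2"
    by (auto simp: mdec_def)
  then show ?thesis using msearch_char by simp
qed

lemma ev_mono:
  "ev Q s p xs = Some v \<Longrightarrow> Q \<subseteq>\<^sub>m Q' \<Longrightarrow> s \<le> s' \<Longrightarrow> ev Q' s' p xs = Some v"
proof (induction p arbitrary: xs v)
  case Zero then show ?case by simp
next
  case Succ then show ?case by simp
next
  case (Proj x) then show ?case by simp
next
  case Orac then show ?case by (auto simp: map_le_def dom_def)
next
  case (Comp h fs)
  from Comp.prems(1) have "None \<notin> set (map (\<lambda>f. ev Q s f xs) fs)"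
    by (rule contrapos_pn) simp
  then have nn: "\<forall>f\<in>set fs. ev Q s f xs \<noteq> None" by (metis image_eqI set_map)
  then have eq: "\<forall>f\<in>set fs. ev Q' s' f xs = ev Q s f xs"
    using Comp.IH(2) Comp.prems(2,3) by fastforce
  have "ev Q s h (map (\<lambda>f. the (ev Q s f xs)) fs) = Some v"
    using Comp.prems(1) nn by (auto split: if_splits)
  then have h': "ev Q' s' h (map (\<lambda>f. the (ev Q s f xs)) fs) = Some v"
    using Comp.IH(1) Comp.prems(2,3) by blast
  have mapeq: "map (\<lambda>f. the (ev Q' s' f xs)) fs = map (\<lambda>f. the (ev Q s f xs)) fs"
    using eq by auto
  have n2: "None \<notin> set (map (\<lambda>f. ev Q' s' f xs) fs)" using nn eq by auto
  show ?case using n2 h' mapeq by (simp only: ev.simps if_False)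
next
  case (PRec b t)
  let ?R = "\<lambda>Q s k. rec_nat (ev Q s b (tl xs))
      (\<lambda>k r. case r of None \<Rightarrow> None | Some v \<Rightarrow> ev Q s t (k # v # tl xs)) k"
  have "\<And>w. ?R Q s k = Some w \<Longrightarrow> ?R Q' s' k = Some w" for k
  proof (induction k)
    case 0 then show ?case using PRec.IH(1) PRec.prems(2,3) by simp
  next
    case (Suc k)
    then obtain u where u: "?R Q s k = Some u" by (cases "?R Q s k") auto
    with Suc show ?case using PRec.IH(2) PRec.prems(2,3) by simp
  qed
  then show ?case using PRec.prems(1) by simp
next
  case (Min f)
  from ev_Min_Some[THEN iffD1, OF Min.prems(1)]
  have y: "v < s" "ev Q s f (v # xs) = Some 0" "\<forall>t<v. posv (ev Q s f (t # xs))"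
    by auto
  have "ev Q' s' f (v # xs) = Some 0" using y Min.IH Min.prems by blast
  moreover have "\<forall>t<v. posv (ev Q' s' f (t # xs))"
    using y(3) Min.IH Min.prems(2,3) unfolding posv_def by blast
  ultimately show ?case using y(1) Min.prems(3) ev_Min_Some[of Q' s' f xs v] by simp
qed


definition restr :: "nat \<Rightarrow> (nat \<Rightarrow> nat option) \<Rightarrow> nat \<Rightarrow> nat option" where
  "restr N Q = (\<lambda>i. if i < N then Q i else None)"

lemma restr_le: "restr N Q \<subseteq>\<^sub>m Q"
  by (auto simp: restr_def map_le_def dom_def)

lemma restr_mono: "N \<le> N' \<Longrightarrow> restr N Q \<subseteq>\<^sub>m restr N' Q"
  by (auto simp: restr_def map_le_def dom_def)

lemma ex_uniform_list0:
  "(\<forall>x\<in>set L. \<exists>N::nat. P x N) \<Longrightarrow> (\<forall>x\<in>set L. \<forall>N N'. P x N \<longrightarrow> N \<le> N' \<longrightarrow> P x N') \<Longrightarrow>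
   \<exists>N. \<forall>x\<in>set L. P x N"
proof (induction L)
  case Nil then show ?case by auto
next
  case (Cons a L)
  have p1: "\<forall>x\<in>set L. \<exists>N. P x N" using Cons.prems(1) by simp
  have p2: "\<forall>x\<in>set L. \<forall>N N'. P x N \<longrightarrow> N \<le> N' \<longrightarrow> P x N'" using Cons.prems(2) by simp
  obtain N where N: "\<forall>x\<in>set L. P x N" using Cons.IH[OF p1 p2] by blast
  obtain M where M: "P a M" using Cons.prems(1) by auto
  have "P a (max N M)" using Cons.prems(2)[rule_format, of a M "max N M"] M by simp
  moreover have "\<forall>x\<in>set L. P x (max N M)"
  proof
    fix x assume x: "x \<in> set L"
    then show "P x (max N M)" using p2[rule_format, OF x, of N "max N M"] N x by simp
  qed
  ultimately have "\<forall>x\<in>set (a # L). P x (max N M)" by simp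
  then show ?case by blast
qed

lemma ex_uniform_list:
  assumes "\<forall>x\<in>set L. \<exists>N::nat. P x N" "\<And>x N N'. x \<in> set L \<Longrightarrow> P x N \<Longrightarrow> N \<le> N' \<Longrightarrow> P x N'"
  shows "\<exists>N. \<forall>x\<in>set L. P x N"
  using ex_uniform_list0[of L P] assms by blast

lemma ex_uniform_nat:
  fixes y :: nat
  assumes "\<forall>t<y. \<exists>N::nat. P t N" "\<And>x N N'. x < y \<Longrightarrow> P x N \<Longrightarrow> N \<le> N' \<Longrightarrow> P x N'"
  shows "\<exists>N. \<forall>t<y. P t N"
proof -
  have "\<exists>N. \<forall>x\<in>set [0..<y]. P x N"
  proof (rule ex_uniform_list)
    show "\<forall>x\<in>set [0..<y]. \<exists>N. P x N" using assms(1) by simp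
    fix x N N' assume "x \<in> set [0..<y]" "P x N" "N \<le> N'"
    then show "P x N'" using assms(2)[of x N N'] by simp
  qed
  then obtain N where "\<forall>x\<in>set [0..<y]. P x N" by blast
  then have "\<forall>t<y. P t N" by simp
  then show ?thesis by blast
qed

lemma ev_restr_mono: "ev (restr N Q) s p xs = Some v \<Longrightarrow> N \<le> N' \<Longrightarrow> ev (restr N' Q) s p xs = Some v"
  using ev_mono restr_mono by blast

lemma ev_use: "ev Q s p xs = Some v \<Longrightarrow> \<exists>N. ev (restr N Q) s p xs = Some v"
proof (induction p arbitrary: xs v)
  case Zero then show ?case by simp
next
  case Succ then show ?case by simp
next
  case (Proj x) then show ?case by simp
next
  case Orac then show ?case by (intro exI[of _ "Suc (hd xs)"]) (simp add: restr_def)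
next
  case (Comp h fs)
  from Comp.prems(1) have "None \<notin> set (map (\<lambda>f. ev Q s f xs) fs)"
    by (rule contrapos_pn) simp
  then have nn: "\<forall>f\<in>set fs. ev Q s f xs \<noteq> None" by (metis image_eqI set_map)
  have hv: "ev Q s h (map (\<lambda>f. the (ev Q s f xs)) fs) = Some v"
    using Comp.prems(1) nn by (auto split: if_splits)
  have "\<forall>f\<in>set fs. \<exists>N. ev (restr N Q) s f xs = ev Q s f xs"
    using Comp.IH(2) nn by fastforce
  moreover have "\<And>f N N'. f \<in> set fs \<Longrightarrow> ev (restr N Q) s f xs = ev Q s f xs \<Longrightarrow> N \<le> N' \<Longrightarrow>
      ev (restr N' Q) s f xs = ev Q s f xs"
  proof -
    fix f N N' assume a: "f \<in> set fs" "ev (restr N Q) s f xs = ev Q s f xs" "N \<le> N'"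
    obtain w where w: "ev Q s f xs = Some w" using nn a(1) by auto
    then show "ev (restr N' Q) s f xs = ev Q s f xs" using ev_restr_mono[OF _ a(3)] a(2) by simp
  qed
  ultimately obtain N1 where N1: "\<forall>f\<in>set fs. ev (restr N1 Q) s f xs = ev Q s f xs"
    using ex_uniform_list[of fs "\<lambda>f N. ev (restr N Q) s f xs = ev Q s f xs"] by blast
  obtain N2 where N2: "ev (restr N2 Q) s h (map (\<lambda>f. the (ev Q s f xs)) fs) = Some v"
    using Comp.IH(1) hv by blast
  let ?N = "max N1 N2"
  have e1: "\<forall>f\<in>set fs. ev (restr ?N Q) s f xs = ev Q s f xs"
  proof
    fix f assume a: "f \<in> set fs"
    obtain w where w: "ev Q s f xs = Some w" using nn a by auto
    then show "ev (restr ?N Q) s f xs = ev Q s f xs"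
      using ev_restr_mono[of N1 Q s f xs w ?N] N1 a by simp
  qed
  have e2: "ev (restr ?N Q) s h (map (\<lambda>f. the (ev Q s f xs)) fs) = Some v"
    using N2 ev_restr_mono by (metis max.cobounded2)
  have mapeq: "map (\<lambda>f. the (ev (restr ?N Q) s f xs)) fs = map (\<lambda>f. the (ev Q s f xs)) fs"
    using e1 by auto
  have n2: "None \<notin> set (map (\<lambda>f. ev (restr ?N Q) s f xs) fs)" using nn e1 by auto
  have "ev (restr ?N Q) s (Comp h fs) xs = Some v"
    using n2 e2 mapeq by (simp only: ev.simps if_False)
  then show ?case by blast
next
  case (PRec b t)
  let ?R = "\<lambda>Q k. rec_nat (ev Q s b (tl xs))
      (\<lambda>k r. case r of None \<Rightarrow> None | Some v \<Rightarrow> ev Q s t (k # v # tl xs)) k"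
  have "\<And>w. ?R Q k = Some w \<Longrightarrow> \<exists>N. ?R (restr N Q) k = Some w" for k
  proof (induction k)
    case 0 then show ?case using PRec.IH(1) by simp
  next
    case (Suc k)
    then obtain u where u: "?R Q k = Some u" by (cases "?R Q k") auto
    with Suc obtain N1 where N1: "?R (restr N1 Q) k = Some u" by blast
    have "ev Q s t (k # u # tl xs) = Some w" using Suc.prems u by simp
    then obtain N2 where N2: "ev (restr N2 Q) s t (k # u # tl xs) = Some w"
      using PRec.IH(2) by blast
    have a: "?R (restr (max N1 N2) Q) k = Some u"
      using ev_mono[of "restr N1 Q" s "PRec b t" "k # tl xs" u "restr (max N1 N2) Q" s] N1
        restr_mono[of N1 "max N1 N2" Q] by simp
    have b: "ev (restr (max N1 N2) Q) s t (k # u # tl xs) = Some w"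
      using N2 ev_restr_mono by (metis max.cobounded2)
    show ?case using a b by (intro exI[of _ "max N1 N2"]) simp
  qed
  then show ?case using PRec.prems(1) by simp
next
  case (Min f)
  from ev_Min_Some[THEN iffD1, OF Min.prems(1)]
  have y: "v < s" "ev Q s f (v # xs) = Some 0" "\<forall>t<v. posv (ev Q s f (t # xs))"
    by auto
  have "\<forall>t<Suc v. \<exists>N. ev (restr N Q) s f (t # xs) = ev Q s f (t # xs)"
    using y Min.IH unfolding posv_def by (metis less_Suc_eq)
  moreover have "\<forall>t<Suc v. ev Q s f (t # xs) \<noteq> None"
    using y unfolding posv_def by (metis less_Suc_eq option.distinct(1))
  moreover have "\<And>t N N'. t < Suc v \<Longrightarrow> ev (restr N Q) s f (t # xs) = ev Q s f (t # xs) \<Longrightarrow> N \<le> N' \<Longrightarrow>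
      ev (restr N' Q) s f (t # xs) = ev Q s f (t # xs)"
  proof -
    fix t N N' assume a: "t < Suc v" "ev (restr N Q) s f (t # xs) = ev Q s f (t # xs)" "N \<le> N'"
    obtain w where w: "ev Q s f (t # xs) = Some w" using calculation(2) a(1) by auto
    then show "ev (restr N' Q) s f (t # xs) = ev Q s f (t # xs)" using ev_restr_mono[OF _ a(3)] a(2) by simp
  qed
  ultimately obtain N where N: "\<forall>t<Suc v. ev (restr N Q) s f (t # xs) = ev Q s f (t # xs)"
    using ex_uniform_nat[of "Suc v" "\<lambda>t N. ev (restr N Q) s f (t # xs) = ev Q s f (t # xs)"]
    by blast
  have "ev (restr N Q) s (Min f) xs = Some v"
    unfolding ev_Min_Some using y N by (simp add: posv_def)
  then show ?case by blast
qed

lemma list_choice: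
  assumes "\<forall>x\<in>set L. \<exists>y. P x y"
  shows "\<exists>ys. length ys = length L \<and> (\<forall>i<length L. P (L ! i) (ys ! i))"
  using assms
proof (induction L)
  case Nil then show ?case by auto
next
  case (Cons a L)
  then obtain ys where ys: "length ys = length L" "\<forall>i<length L. P (L ! i) (ys ! i)" by auto
  obtain y where "P a y" using Cons.prems by auto
  then show ?case using ys by (intro exI[of _ "y # ys"]) (auto simp: nth_Cons split: nat.splits)
qed

definition computes :: "(nat \<Rightarrow> nat) \<Rightarrow> nat \<Rightarrow> (nat list \<Rightarrow> nat) \<Rightarrow> prog \<Rightarrow> bool" where
  "computes g n f p \<longleftrightarrow> (\<forall>xs. length xs = n \<longrightarrow> (\<exists>s. ev (\<lambda>i. Some (g i)) s p xs = Some (f xs)))"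

lemma ev_fuel_mono: "ev Q s p xs = Some v \<Longrightarrow> s \<le> s' \<Longrightarrow> ev Q s' p xs = Some v"
  using ev_mono map_le_refl by blast

lemma rec_prog: "rec_in g n f \<Longrightarrow> \<exists>p. computes g n f p"
proof (induction rule: rec_in.induct)
  case (zero n)
  then show ?case by (intro exI[of _ Zero]) (simp add: computes_def)
next
  case succ
  then show ?case by (intro exI[of _ Succ]) (simp add: computes_def)
next
  case (proj i n)
  then show ?case by (intro exI[of _ "Proj i"]) (simp add: computes_def)
next
  case orac
  then show ?case by (intro exI[of _ Orac]) (simp add: computes_def)
next
  case (comp m h fs n)
  obtain ph where ph: "computes g m h ph" using comp.IH by blast
  have "\<forall>f\<in>set fs. \<exists>p. computes g n f p" using comp.IH(2) by blast
  then obtain ps where ps: "length ps = length fs" "\<forall>i<length fs. computes g n (fs ! i) (ps ! i)"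
    using list_choice by blast
  have "computes g n (\<lambda>xs. h (map (\<lambda>f. f xs) fs)) (Comp ph ps)"
    unfolding computes_def
  proof (intro allI impI)
    fix xs :: "nat list" assume len: "length xs = n"
    let ?Q = "\<lambda>i. Some (g i)"
    have "\<forall>i<length fs. \<exists>s. ev ?Q s (ps ! i) xs = Some ((fs ! i) xs)"
      using ps len unfolding computes_def by blast
    then obtain s1 where s1: "\<forall>i<length fs. ev ?Q s1 (ps ! i) xs = Some ((fs ! i) xs)"
      using ex_uniform_nat[of "length fs" "\<lambda>i s. ev ?Q s (ps ! i) xs = Some ((fs ! i) xs)"]
        ev_fuel_mono by blast
    obtain s2 where s2: "ev ?Q s2 ph (map (\<lambda>f. f xs) fs) = Some (h (map (\<lambda>f. f xs) fs))"
      using ph comp.hyps(2) unfolding computes_def by (metis length_map)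
    let ?s = "max s1 s2"
    have e1: "\<forall>i<length fs. ev ?Q ?s (ps ! i) xs = Some ((fs ! i) xs)"
      using s1 ev_fuel_mono by (metis max.cobounded1)
    have e2: "ev ?Q ?s ph (map (\<lambda>f. f xs) fs) = Some (h (map (\<lambda>f. f xs) fs))"
      using s2 ev_fuel_mono by (metis max.cobounded2)
    have n2: "None \<notin> set (map (\<lambda>p. ev ?Q ?s p xs) ps)"
      using e1 ps(1) by (auto simp: in_set_conv_nth)
    have mapeq: "map (\<lambda>p. the (ev ?Q ?s p xs)) ps = map (\<lambda>f. f xs) fs"
      using e1 ps(1) by (auto intro!: nth_equalityI)
    have "ev ?Q ?s (Comp ph ps) xs = Some (h (map (\<lambda>f. f xs) fs))"
      using n2 e2 mapeq by (simp only: ev.simps if_False)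
    then show "\<exists>s. ev ?Q s (Comp ph ps) xs = Some (h (map (\<lambda>f. f xs) fs))" by blast
  qed
  then show ?case by blast
next
  case (prim_rec n b t)
  obtain pb where pb: "computes g n b pb" using prim_rec.IH by blast
  obtain pt where pt: "computes g (n + 2) t pt" using prim_rec.IH by blast
  have "computes g (n + 1) (\<lambda>xs. rec_nat (b (tl xs)) (\<lambda>k r. t (k # r # tl xs)) (hd xs)) (PRec pb pt)"
    unfolding computes_def
  proof (intro allI impI)
    fix xs :: "nat list" assume len: "length xs = n + 1"
    let ?Q = "\<lambda>i. Some (g i)"
    let ?R = "\<lambda>s k. rec_nat (ev ?Q s pb (tl xs))
      (\<lambda>k r. case r of None \<Rightarrow> None | Some v \<Rightarrow> ev ?Q s pt (k # v # tl xs)) k"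
    have "\<exists>s. ?R s k = Some (rec_nat (b (tl xs)) (\<lambda>k r. t (k # r # tl xs)) k)" for k
    proof (induction k)
      case 0
      then show ?case using pb len unfolding computes_def by simp
    next
      case (Suc k)
      then obtain s1 where s1: "?R s1 k = Some (rec_nat (b (tl xs)) (\<lambda>k r. t (k # r # tl xs)) k)"
        by blast
      let ?v = "rec_nat (b (tl xs)) (\<lambda>k r. t (k # r # tl xs)) k"
      have "length (k # ?v # tl xs) = n + 2" using len by simp
      then obtain s2 where s2: "ev ?Q s2 pt (k # ?v # tl xs) = Some (t (k # ?v # tl xs))"
        using pt unfolding computes_def by blast
      have "ev ?Q s1 (PRec pb pt) (k # tl xs) = Some ?v" using s1 by (simp only: ev.simps list.sel)
      from ev_fuel_mono[OF this, of "max s1 s2"]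
      have a: "?R (max s1 s2) k = Some ?v" by (simp only: ev.simps list.sel max.cobounded1 simp_thms)
      have b: "ev ?Q (max s1 s2) pt (k # ?v # tl xs) = Some (t (k # ?v # tl xs))"
        by (rule ev_fuel_mono[OF s2 max.cobounded2])
      show ?case using a b by (intro exI[of _ "max s1 s2"]) simp
    qed
    then show "\<exists>s. ev ?Q s (PRec pb pt) xs = Some (rec_nat (b (tl xs)) (\<lambda>k r. t (k # r # tl xs)) (hd xs))"
      by simp
  qed
  then show ?case by blast
next
  case (minim n f)
  obtain pf where pf: "computes g (n + 1) f pf" using minim.IH by blast
  have "computes g n (\<lambda>xs. LEAST y. f (y # xs) = 0) (Min pf)"
    unfolding computes_def
  proof (intro allI impI)
    fix xs :: "nat list" assume len: "length xs = n"
    let ?Q = "\<lambda>i. Some (g i)"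
    let ?y = "LEAST y. f (y # xs) = 0"
    obtain y0 where "f (y0 # xs) = 0" using minim.hyps(2) len by blast
    then have fy: "f (?y # xs) = 0" by (rule LeastI)
    have fl: "\<forall>t<?y. f (t # xs) \<noteq> 0" using not_less_Least by blast
    have "\<forall>t<Suc ?y. \<exists>s. ev ?Q s pf (t # xs) = Some (f (t # xs))"
      using pf len unfolding computes_def by simp
    then obtain s1 where s1: "\<forall>t<Suc ?y. ev ?Q s1 pf (t # xs) = Some (f (t # xs))"
      using ex_uniform_nat[of "Suc ?y" "\<lambda>t s. ev ?Q s pf (t # xs) = Some (f (t # xs))"]
        ev_fuel_mono by blast
    let ?s = "max s1 (Suc ?y)"
    have e: "\<forall>t<Suc ?y. ev ?Q ?s pf (t # xs) = Some (f (t # xs))"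
      using s1 ev_fuel_mono[OF _ max.cobounded1] by blast
    have a: "?y < ?s" by simp
    have b: "ev ?Q ?s pf (?y # xs) = Some 0" using e[rule_format, OF lessI] fy by simp
    have c: "\<forall>t<?y. posv (ev ?Q ?s pf (t # xs))"
    proof (intro allI impI)
      fix t assume t: "t < ?y"
      have "ev ?Q ?s pf (t # xs) = Some (f (t # xs))" using e[rule_format, OF less_SucI[OF t]] .
      moreover have "f (t # xs) \<noteq> 0" using fl t by blast
      moreover obtain v where "f (t # xs) = Suc v" using not0_implies_Suc calculation(2) by blast
      ultimately show "posv (ev ?Q ?s pf (t # xs))" unfolding posv_def by simp
    qed
    have "ev ?Q ?s (Min pf) xs = Some ?y"
      using ev_Min_Some[of ?Q ?s pf xs ?y] a b c by blast
    then show "\<exists>s. ev ?Q s (Min pf) xs = Some ?y" by blast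
  qed
  then show ?case by blast
qed


definition cod :: "nat option \<Rightarrow> nat" where
  "cod e = (case e of None \<Rightarrow> 0 | Some v \<Rightarrow> Suc v)"

lemma cod_simps[simp]: "cod None = 0" "cod (Some v) = Suc v"
  by (auto simp: cod_def)

lemma cod_0_iff: "cod e = 0 \<longleftrightarrow> e = None"
  by (cases e) auto

lemma nth_beyond: "length xs = n \<Longrightarrow> n \<le> i \<Longrightarrow> xs ! i = [] ! (i - n)"
proof (induction xs arbitrary: i n)
  case Nil then show ?case by simp
next
  case (Cons a xs)
  then show ?case by (cases i) auto
qed

lemma map_nth_drop: "length ys = N \<Longrightarrow> map (\<lambda>i. ys ! i) [k..<N] = drop k ys"
  by (rule nth_equalityI) auto

lemma rf_nth_drop3: "rf g (n + 3) (\<lambda>ys. drop 3 ys ! i)"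
proof (cases "i < n")
  case True
  have "rf g (n + 3) (\<lambda>ys. ys ! (i + 3))" by (rule rf_proj) (use True in simp)
  then show ?thesis by (rule rf_cong) (simp add: add.commute)
next
  case False
  show ?thesis
  proof (rule rf_cong[OF rf_const[of g "n+3" "[] ! (i - n)"]])
    fix ys :: "nat list" assume "length ys = n + 3"
    then have "length (drop 3 ys) = n" by simp
    then show "[] ! (i - n) = drop 3 ys ! i" using nth_beyond[of "drop 3 ys" n i] False by simp
  qed
qed

lemma rf_hd_drop3: "rf g (n + 3) (\<lambda>ys. hd (drop 3 ys))"
proof (cases n)
  case 0
  show ?thesis by (rule rf_cong[OF rf_const[of g "n+3" "hd []"]]) (use 0 in auto)
next
  case (Suc m)
  have "rf g (n + 3) (\<lambda>ys. ys ! 3)" by (rule rf_proj) (use Suc in simp)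
  then show ?thesis by (rule rf_cong) (simp add: hd_drop_conv_nth Suc)
qed

lemma rp_list_ex: "\<forall>F\<in>set Fs. rf g n F \<Longrightarrow> rp g n (\<lambda>ys. \<exists>F\<in>set Fs. F ys = 0)"
proof (induction Fs)
  case Nil
  then show ?case by (auto intro: rp_cong[OF rp_const[of g n False]])
next
  case (Cons F Fs)
  have "rp g n (\<lambda>ys. F ys = 0 \<or> (\<exists>F\<in>set Fs. F ys = 0))"
    using Cons by (intro rp_disj rp_eq rf_const) auto
  then show ?case by (rule rp_cong) auto
qed

lemma cod_recnat:
  "cod (rec_nat A (\<lambda>k r. case r of None \<Rightarrow> None | Some v \<Rightarrow> Fn k v) x) =
   rec_nat (cod A) (\<lambda>k R. if R = 0 then 0 else cod (Fn k (R - 1))) x"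
proof (induction x)
  case 0 then show ?case by simp
next
  case (Suc x)
  define r where "r = rec_nat A (\<lambda>k r. case r of None \<Rightarrow> None | Some v \<Rightarrow> Fn k v) x"
  have IH: "cod r = rec_nat (cod A) (\<lambda>k R. if R = 0 then 0 else cod (Fn k (R - 1))) x"
    using Suc.IH unfolding r_def .
  have L: "rec_nat A (\<lambda>k r. case r of None \<Rightarrow> None | Some v \<Rightarrow> Fn k v) (Suc x) =
     (case r of None \<Rightarrow> None | Some v \<Rightarrow> Fn x v)" unfolding r_def by simp
  have R: "rec_nat (cod A) (\<lambda>k R. if R = 0 then 0 else cod (Fn k (R - 1))) (Suc x) =
     (if cod r = 0 then 0 else cod (Fn x (cod r - 1)))" unfolding IH by simp
  show ?case unfolding L R by (cases r) auto
qed

lemma mstep_cod: "mstep st t e = (if st = 1 then (if cod e = 0 then 0 else if cod e = 1 then t + 2 else 1) else st)"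
  unfolding mstep_def by (cases e) (auto split: nat.splits)

lemma cod_mdec: "cod (mdec st) = (if 2 \<le> st then st - 1 else 0)"
  unfolding mdec_def by auto


definition Ev :: "(nat \<Rightarrow> nat \<Rightarrow> nat \<Rightarrow> nat option) \<Rightarrow> prog \<Rightarrow> nat list \<Rightarrow> nat" where
  "Ev \<Omega> p ys = cod (ev (\<Omega> (ys ! 1) (ys ! 2)) (ys ! 0) p (drop 3 ys))"

lemma Ev_prefix: "Ev \<Omega> p ([a, b, c] @ M) = cod (ev (\<Omega> b c) a p M)"
  unfolding Ev_def by simp

lemma Ev_Cons3: "Ev \<Omega> p (a # b # c # M) = cod (ev (\<Omega> b c) a p M)"
  unfolding Ev_def by simp

lemma the_cod: "e \<noteq> None \<Longrightarrow> the e = cod e - 1"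
  by (cases e) auto

lemma rf_pred': "rf g n A \<Longrightarrow> rf g n (\<lambda>xs. A xs - Suc 0)"
  using rf_pred by simp

lemma drop_tl_Suc: "drop n (tl ys) = drop (Suc n) ys"
  by (simp add: drop_Suc)

lemma ev_rf:
  assumes W: "rf g 3 (\<lambda>ys. cod (\<Omega> (ys ! 0) (ys ! 1) (ys ! 2)))"
  shows "rf g (n + 3) (Ev \<Omega> p)"
proof (induction p arbitrary: n)
  case Zero
  show ?case by (rule rf_cong[OF rf_const[of g "n+3" 1]]) (simp add: Ev_def)
next
  case Succ
  show ?case by (rule rf_cong[OF rf_Suc[OF rf_Suc[OF rf_hd_drop3]]]) (simp add: Ev_def)
next
  case (Proj i)
  show ?case by (rule rf_cong[OF rf_Suc[OF rf_nth_drop3[of g n i]]]) (simp add: Ev_def)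
next
  case Orac
  have "rf g (n + 3) (\<lambda>ys. (\<lambda>zs. cod (\<Omega> (zs ! 0) (zs ! 1) (zs ! 2))) [ys ! 1, ys ! 2, hd (drop 3 ys)])"
    by (rule rf_comp3[OF W]) (auto intro: rf_proj rf_hd_drop3)
  then show ?case by (rule rf_cong) (simp add: Ev_def)
next
  case (Comp h fs)
  let ?Fs = "map (\<lambda>f ys. Ev \<Omega> f ys) fs"
  have fsrf: "\<forall>F\<in>set ?Fs. rf g (n + 3) F" using Comp.IH(2) by auto
  have c1: "rp g (n + 3) (\<lambda>ys. \<exists>F\<in>set ?Fs. F ys = 0)" by (rule rp_list_ex[OF fsrf])
  let ?Gs = "[\<lambda>ys. ys ! 0, \<lambda>ys. ys ! 1, \<lambda>ys. ys ! 2] @ map (\<lambda>f ys. Ev \<Omega> f ys - 1) fs"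
  have c2: "rf g (n + 3) (\<lambda>ys. Ev \<Omega> h (map (\<lambda>F. F ys) ?Gs))"
  proof (rule rf_comp)
    show "rf g (length fs + 3) (Ev \<Omega> h)" by (rule Comp.IH(1))
    show "length ?Gs = length fs + 3" by simp
    show "\<forall>F\<in>set ?Gs. rf g (n + 3) F"
      using Comp.IH(2) by (auto intro: rf_proj rf_pred')
  qed
  have "rf g (n + 3) (\<lambda>ys. if (\<exists>F\<in>set ?Fs. F ys = 0) then 0 else Ev \<Omega> h (map (\<lambda>F. F ys) ?Gs))"
    by (rule rf_if[OF c1 rf_const c2])
  then show ?case
  proof (rule rf_cong)
    fix ys :: "nat list"
    let ?Q = "\<Omega> (ys ! 1) (ys ! 2)" and ?s = "ys ! 0" and ?xs = "drop 3 ys"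
    have iff: "(\<exists>F\<in>set ?Fs. F ys = 0) \<longleftrightarrow> None \<in> set (map (\<lambda>f. ev ?Q ?s f ?xs) fs)"
      by (auto simp: Ev_def cod_0_iff image_iff) (metis, metis)
    show "(if (\<exists>F\<in>set ?Fs. F ys = 0) then 0 else Ev \<Omega> h (map (\<lambda>F. F ys) ?Gs)) = Ev \<Omega> (Comp h fs) ys"
    proof (cases "None \<in> set (map (\<lambda>f. ev ?Q ?s f ?xs) fs)")
      case True
      then show ?thesis using iff by (simp add: Ev_def)
    next
      case False
      then have nn: "\<forall>f\<in>set fs. ev ?Q ?s f ?xs \<noteq> None" by (metis image_eqI set_map)
      have m: "map (\<lambda>f. the (ev ?Q ?s f ?xs)) fs = map (\<lambda>f. Ev \<Omega> f ys - 1) fs"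
        using nn by (auto simp: Ev_def the_cod)
      have "map (\<lambda>F. F ys) ?Gs = [ys ! 0, ys ! 1, ys ! 2] @ map (\<lambda>f. Ev \<Omega> f ys - 1) fs"
        by simp
      then have "Ev \<Omega> h (map (\<lambda>F. F ys) ?Gs) = cod (ev ?Q ?s h (map (\<lambda>f. Ev \<Omega> f ys - 1) fs))"
        by (simp only: Ev_prefix)
      moreover have "\<not> (\<exists>F\<in>set ?Fs. F ys = 0)" using False iff by blast
      moreover have "Ev \<Omega> (Comp h fs) ys = cod (ev ?Q ?s h (map (\<lambda>f. the (ev ?Q ?s f ?xs)) fs))"
        using False unfolding Ev_def by (simp only: ev.simps if_False)
      ultimately show ?thesis unfolding m by (auto simp: comp_def)
    qed
  qed
next
  case (PRec b t)
  define B where "B = (\<lambda>ys. Ev \<Omega> b ([ys ! 0, ys ! 1, ys ! 2] @ drop 4 ys))"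
  define S where "S = (\<lambda>zs. if zs ! 1 = 0 then 0 else Ev \<Omega> t ([zs ! 2, zs ! 3, zs ! 4, zs ! 0, zs ! 1 - 1] @ drop 6 zs))"
  have Brf: "rf g (n + 3) B"
  proof -
    let ?Fs = "[\<lambda>ys. ys ! 0, \<lambda>ys. ys ! 1, \<lambda>ys. ys ! 2] @ map (\<lambda>i ys. ys ! i) [4..<n+3]"
    have "rf g (n + 3) (\<lambda>ys. Ev \<Omega> b (map (\<lambda>F. F ys) ?Fs))"
    proof (rule rf_comp)
      show "rf g ((n - 1) + 3) (Ev \<Omega> b)" by (rule PRec.IH(1))
      show "length ?Fs = n - 1 + 3" by simp
      show "\<forall>F\<in>set ?Fs. rf g (n + 3) F" by (auto intro: rf_proj)
    qed
    then show ?thesis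
    proof (rule rf_cong)
      fix ys :: "nat list" assume "length ys = n + 3"
      then have "map (\<lambda>i. ys ! i) [4..<n+3] = drop 4 ys" by (rule map_nth_drop)
      then show "Ev \<Omega> b (map (\<lambda>F. F ys) ?Fs) = B ys" unfolding B_def by (simp add: comp_def)
    qed
  qed
  have Srf: "rf g (Suc (Suc (n + 3))) S"
  proof -
    let ?Fs = "[\<lambda>zs. zs ! 2, \<lambda>zs. zs ! 3, \<lambda>zs. zs ! 4, \<lambda>zs. zs ! 0, \<lambda>zs. zs ! 1 - 1] @ map (\<lambda>i zs. zs ! i) [6..<n+5]"
    have "rf g (Suc (Suc (n + 3))) (\<lambda>zs. Ev \<Omega> t (map (\<lambda>F. F zs) ?Fs))"
    proof (rule rf_comp)
      show "rf g ((n - 1 + 2) + 3) (Ev \<Omega> t)" by (rule PRec.IH(2))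
      show "length ?Fs = n - 1 + 2 + 3" by simp
      show "\<forall>F\<in>set ?Fs. rf g (Suc (Suc (n + 3))) F" by (auto intro!: rf_pred' rf_proj)
    qed
    then have "rf g (Suc (Suc (n + 3))) (\<lambda>zs. if zs ! 1 = 0 then 0 else Ev \<Omega> t (map (\<lambda>F. F zs) ?Fs))"
      by (intro rf_if rp_eq rf_proj rf_const) auto
    then show ?thesis
    proof (rule rf_cong)
      fix zs :: "nat list" assume "length zs = Suc (Suc (n + 3))"
      then have "map (\<lambda>i. zs ! i) [6..<n+5] = drop 6 zs" by (intro map_nth_drop) simp
      then show "(if zs ! 1 = 0 then 0 else Ev \<Omega> t (map (\<lambda>F. F zs) ?Fs)) = S zs" unfolding S_def by (simp add: comp_def)
    qed
  qed
  have "rf g (n + 3) (\<lambda>ys. rec_nat (B ys) (\<lambda>k r. S (k # r # ys)) (hd (drop 3 ys)))"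
    by (rule rf_recnat[OF Brf Srf rf_hd_drop3])
  then show ?case
  proof (rule rf_cong)
    fix ys :: "nat list"
    let ?Q = "\<Omega> (ys ! 1) (ys ! 2)" and ?s = "ys ! 0" and ?xs = "drop 3 ys"
    have Bys: "B ys = cod (ev ?Q ?s b (tl ?xs))" unfolding B_def Ev_prefix by (simp add: tl_drop drop_tl_Suc)
    have Sk: "S (k # r # ys) = (if r = 0 then 0 else cod (ev ?Q ?s t (k # (r - 1) # tl ?xs)))" for k r
      unfolding S_def by (simp add: Ev_Cons3 tl_drop drop_tl_Suc)
    show "rec_nat (B ys) (\<lambda>k r. S (k # r # ys)) (hd ?xs) = Ev \<Omega> (PRec b t) ys"
      unfolding Ev_def Bys Sk by (simp add: cod_recnat del: One_nat_def)
  qed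
next
  case (Min f)
  define C where "C = (\<lambda>zs. Ev \<Omega> f ([zs ! 2, zs ! 3, zs ! 4, zs ! 0] @ drop 5 zs))"
  define S where "S = (\<lambda>zs. if zs ! 1 = 1 then (if C zs = 0 then 0 else if C zs = 1 then zs ! 0 + 2 else 1) else zs ! 1)"
  have Crf: "rf g (Suc (Suc (n + 3))) C"
  proof -
    let ?Fs = "[\<lambda>zs. zs ! 2, \<lambda>zs. zs ! 3, \<lambda>zs. zs ! 4, \<lambda>zs. zs ! 0] @ map (\<lambda>i zs. zs ! i) [5..<n+5]"
    have "rf g (Suc (Suc (n + 3))) (\<lambda>zs. Ev \<Omega> f (map (\<lambda>F. F zs) ?Fs))"
    proof (rule rf_comp)
      show "rf g ((n + 1) + 3) (Ev \<Omega> f)" by (rule Min.IH)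
      show "length ?Fs = n + 1 + 3" by simp
      show "\<forall>F\<in>set ?Fs. rf g (Suc (Suc (n + 3))) F" by (auto intro!: rf_proj)
    qed
    then show ?thesis
    proof (rule rf_cong)
      fix zs :: "nat list" assume "length zs = Suc (Suc (n + 3))"
      then have "map (\<lambda>i. zs ! i) [5..<n+5] = drop 5 zs" by (intro map_nth_drop) simp
      then show "Ev \<Omega> f (map (\<lambda>F. F zs) ?Fs) = C zs" unfolding C_def by (simp add: comp_def)
    qed
  qed
  have Srf: "rf g (Suc (Suc (n + 3))) S"
    unfolding S_def by (intro rf_if rp_eq rf_proj rf_const Crf rf_add) auto
  have M: "rf g (n + 3) (\<lambda>ys. rec_nat 1 (\<lambda>k r. S (k # r # ys)) (ys ! 0))"
    by (rule rf_recnat[OF rf_const Srf rf_proj]) simp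
  have "rf g (n + 3) (\<lambda>ys. if 2 \<le> rec_nat 1 (\<lambda>k r. S (k # r # ys)) (ys ! 0)
      then rec_nat 1 (\<lambda>k r. S (k # r # ys)) (ys ! 0) - 1 else 0)"
    by (intro rf_if rp_le rf_const M rf_pred)
  then show ?case
  proof (rule rf_cong)
    fix ys :: "nat list"
    let ?Q = "\<Omega> (ys ! 1) (ys ! 2)" and ?s = "ys ! 0" and ?xs = "drop 3 ys"
    have Ck: "C (k # r # ys) = cod (ev ?Q ?s f (k # ?xs))" for k r
      unfolding C_def by (simp add: Ev_Cons3 tl_drop drop_tl_Suc)
    have Sk: "(\<lambda>k r. S (k # r # ys)) = (\<lambda>t st. mstep st t (ev ?Q ?s f (t # ?xs)))"
      by (intro ext) (simp only: S_def Ck mstep_cod, simp)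
    show "(if 2 \<le> rec_nat 1 (\<lambda>k r. S (k # r # ys)) (ys ! 0)
      then rec_nat 1 (\<lambda>k r. S (k # r # ys)) (ys ! 0) - 1 else 0) = Ev \<Omega> (Min f) ys"
      unfolding Ev_def Sk by (simp add: msearch_def cod_mdec)
  qed
qed


type_synonym cnd = "nat \<times> bool list list \<times> bool list list"

definition cm :: "cnd \<Rightarrow> nat" where "cm q = fst q"
definition ctau :: "cnd \<Rightarrow> bool list list" where "ctau q = fst (snd q)"
definition csig :: "cnd \<Rightarrow> nat \<Rightarrow> bool list" where
  "csig q n = (if n < length (snd (snd q)) then snd (snd q) ! n else [])"

definition Oq :: "cnd \<Rightarrow> (nat \<Rightarrow> nat \<Rightarrow> bool) \<Rightarrow> nat \<Rightarrow> nat option" where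
  "Oq q X i = (if pcol i < cm q then
      Some (of_bool (if prow i < length (ctau q ! pcol i) then ctau q ! pcol i ! prow i else X (pcol i) (prow i)))
    else if prow i < length (csig q (pcol i)) then Some (of_bool (csig q (pcol i) ! prow i)) else None)"

lemma Oq_pos: "Oq q X (pos n k) = (if n < cm q then
      Some (of_bool (if k < length (ctau q ! n) then ctau q ! n ! k else X n k))
    else if k < length (csig q n) then Some (of_bool (csig q n ! k)) else None)"
  unfolding Oq_def by (simp add: pcol_pos prow_pos)

lemma Oq_val: "Oq q X i = Some v \<Longrightarrow> v = 0 \<or> v = 1"
  unfolding Oq_def by (auto split: if_splits)

definition sext :: "cnd \<Rightarrow> cnd \<Rightarrow> bool" where
  "sext q q' \<longleftrightarrow> cm q' = cm q \<and> ctau q' = ctau q \<and> (\<forall>n\<ge>cm q. prefix (csig q n) (csig q' n))"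

lemma sext_refl: "sext q q" unfolding sext_def by auto

lemma sext_trans: "sext q q' \<Longrightarrow> sext q' q'' \<Longrightarrow> sext q q''"
  unfolding sext_def by (metis prefix_order.order_trans)

lemma sext_le: "sext q q' \<Longrightarrow> Oq q X \<subseteq>\<^sub>m Oq q' X"
proof (unfold map_le_def, intro ballI)
  fix i assume s: "sext q q'" and i: "i \<in> dom (Oq q X)"
  show "Oq q X i = Oq q' X i"
  proof (cases "pcol i < cm q")
    case True then show ?thesis using s unfolding Oq_def sext_def by simp
  next
    case False
    then have "prow i < length (csig q (pcol i))" using i unfolding Oq_def by (auto split: if_splits)
    moreover obtain zs where "csig q' (pcol i) = csig q (pcol i) @ zs"
      using s False unfolding sext_def prefix_def by (meson not_le)
    ultimately show ?thesis using False s unfolding Oq_def sext_def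
      by (auto simp: nth_append)
  qed
qed

definition Om :: "cnd \<Rightarrow> (nat \<Rightarrow> nat \<Rightarrow> bool) \<Rightarrow> nat \<Rightarrow> nat \<Rightarrow> nat \<Rightarrow> nat option" where
  "Om q X c L i = (case Oq q X i of Some b \<Rightarrow> Some b | None \<Rightarrow> if i < L then Some (of_bool (bit c i)) else None)"

lemma Om_0: "Om q X c 0 = Oq q X"
  unfolding Om_def by (auto split: option.splits)

lemma Oq_le_Om: "Oq q X \<subseteq>\<^sub>m Om q X c L"
  unfolding Om_def map_le_def by auto

lemma bits_mod: "(c::nat) mod 2 ^ L = c' mod 2 ^ L \<longleftrightarrow> (\<forall>i<L. bit c i = bit c' i)"
  unfolding take_bit_eq_mod[symmetric] bit_eq_iff by (auto simp: bit_take_bit_iff)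

lemma Om_mono: "L \<le> L' \<Longrightarrow> c mod 2 ^ L = c' mod 2 ^ L \<Longrightarrow> Om q X c L \<subseteq>\<^sub>m Om q X c' L'"
  unfolding Om_def map_le_def bits_mod by (auto split: option.splits if_splits)

lemma bits_exist: "\<exists>c::nat. \<forall>i<L. bit c i = B i"
  by (intro exI[of _ "horner_sum of_bool 2 (map B [0..<L])"]) (simp add: bit_horner_sum_bit_iff)

definition rcount :: "nat \<Rightarrow> nat \<Rightarrow> nat" where
  "rcount L n = (LEAST k. L \<le> pos n k)"

lemma rcount_iff: "k < rcount L n \<longleftrightarrow> pos n k < L"
proof
  assume "k < rcount L n"
  then show "pos n k < L" unfolding rcount_def using not_less_Least by (metis not_le)
next
  assume a: "pos n k < L"
  have ex: "L \<le> pos n L" by (rule pos_ge_k)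
  show "k < rcount L n"
  proof (rule ccontr)
    assume "\<not> k < rcount L n"
    then have "rcount L n \<le> k" by simp
    moreover have "L \<le> pos n (rcount L n)" unfolding rcount_def by (rule LeastI[of _ L]) (rule ex)
    ultimately have "L \<le> pos n k" using pos_mono_k by (metis le_less le_trans)
    with a show False by simp
  qed
qed

definition extsig :: "cnd \<Rightarrow> nat \<Rightarrow> nat \<Rightarrow> bool list list" where
  "extsig q c L = map (\<lambda>n. if n < cm q then csig q n
       else csig q n @ map (\<lambda>k. bit c (pos n k)) [length (csig q n) ..< rcount L n])
     [0..<max (length (snd (snd q))) L]"

definition qext :: "cnd \<Rightarrow> nat \<Rightarrow> nat \<Rightarrow> cnd" where
  "qext q c L = (cm q, ctau q, extsig q c L)"

lemma csig_qext: "csig (qext q c L) n = (if n < max (length (snd (snd q))) L then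
    (if n < cm q then csig q n else csig q n @ map (\<lambda>k. bit c (pos n k)) [length (csig q n) ..< rcount L n])
   else [])"
  unfolding csig_def qext_def extsig_def by simp

lemma csig_beyond: "length (snd (snd q)) \<le> n \<Longrightarrow> csig q n = []"
  unfolding csig_def by simp

lemma sext_qext: "sext q (qext q c L)"
  unfolding sext_def
proof (intro conjI allI impI)
  show "cm (qext q c L) = cm q" "ctau (qext q c L) = ctau q"
    unfolding qext_def cm_def ctau_def by simp_all
  fix n assume "cm q \<le> n"
  then show "prefix (csig q n) (csig (qext q c L) n)"
    unfolding csig_qext by (auto simp: csig_beyond)
qed

lemma Oq_qext_pos: "Oq (qext q c L) X (pos n k) = Om q X c L (pos n k)"
proof -
  have cmq: "cm (qext q c L) = cm q" and ctq: "ctau (qext q c L) = ctau q"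
    unfolding qext_def cm_def ctau_def by simp_all
  show ?thesis
  proof (cases "n < cm q")
    case True
    then show ?thesis unfolding Om_def Oq_pos cmq ctq by simp
  next
    case nm: False
    show ?thesis
    proof (cases "n < max (length (snd (snd q))) L")
      case True
      let ?s = "csig q n"
      let ?E = "map (\<lambda>k. bit c (pos n k)) [length ?s ..< rcount L n]"
      have cs: "csig (qext q c L) n = ?s @ ?E" unfolding csig_qext using True nm by simp
      show ?thesis
      proof (cases "k < length ?s")
        case True
        then show ?thesis unfolding Om_def Oq_pos cmq ctq cs using nm by (simp add: nth_append)
      next
        case False
        have "k < length (?s @ ?E) \<longleftrightarrow> k < rcount L n" using False by auto
        also have "\<dots> \<longleftrightarrow> pos n k < L" by (rule rcount_iff)
        finally have len: "k < length (?s @ ?E) \<longleftrightarrow> pos n k < L" .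
        have v: "k < length (?s @ ?E) \<Longrightarrow> (?s @ ?E) ! k = bit c (pos n k)"
          using False by (auto simp: nth_append)
        show ?thesis unfolding Om_def Oq_pos cmq ctq cs using nm False len v by auto
      qed
    next
      case False
      then have "csig (qext q c L) n = []" unfolding csig_qext by simp
      moreover have "csig q n = []" using False by (simp add: csig_beyond)
      moreover have "\<not> pos n k < L" using False pos_ge_n[of n k] by simp
      ultimately show ?thesis unfolding Om_def Oq_pos cmq ctq using nm by simp
    qed
  qed
qed

lemma Oq_qext: "Oq (qext q c L) X = Om q X c L"
proof
  fix i
  show "Oq (qext q c L) X i = Om q X c L i"
    using Oq_qext_pos[of q c L X "pcol i" "prow i"] by (simp add: pos_pcol_prow)
qed

lemma Om_repr: "\<exists>q'. sext q q' \<and> Oq q' X = Om q X c L"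
  using sext_qext Oq_qext by blast

lemma Om_extend:
  assumes s: "sext q q''" and le: "Om q X c L \<subseteq>\<^sub>m Oq q'' X"
  shows "\<exists>c' L'. L \<le> L' \<and> c mod 2 ^ L = c' mod 2 ^ L \<and> restr N (Oq q'' X) \<subseteq>\<^sub>m Om q X c' L'"
proof -
  let ?L' = "max L N"
  let ?B = "\<lambda>i. if i < L then bit c i else Oq q'' X i = Some 1"
  obtain c' :: nat where c': "\<forall>i<?L'. bit c' i = ?B i" using bits_exist[of ?L' ?B] by blast
  have m: "c mod 2 ^ L = c' mod 2 ^ L" unfolding bits_mod using c' by auto
  have "restr N (Oq q'' X) \<subseteq>\<^sub>m Om q X c' ?L'"
  proof (unfold map_le_def, intro ballI)
    fix i assume "i \<in> dom (restr N (Oq q'' X))"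
    then obtain v where iN: "i < N" and v: "Oq q'' X i = Some v" by (auto simp: restr_def split: if_splits)
    have r: "restr N (Oq q'' X) i = Some v" using iN v by (simp add: restr_def)
    show "restr N (Oq q'' X) i = Om q X c' ?L' i"
    proof (cases "Oq q X i")
      case (Some b)
      then have "Oq q'' X i = Some b" using sext_le[OF s, of X] unfolding map_le_def by (metis domI)
      then show ?thesis using r v Some by (simp add: Om_def)
    next
      case None
      show ?thesis
      proof (cases "i < L")
        case True
        then have "Om q X c L i = Some (of_bool (bit c i))" using None by (simp add: Om_def)
        then have "Oq q'' X i = Some (of_bool (bit c i))" using le unfolding map_le_def by (metis domI)
        then show ?thesis using r v None True c' by (simp add: Om_def)
      next
        case False
        have "v = 0 \<or> v = 1" using Oq_val v by blast
        then show ?thesis using r v None False c' iN by (auto simp: Om_def)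
      qed
    qed
  qed
  then show ?thesis using m by (intro exI[of _ c'] exI[of _ ?L']) auto
qed

lemma ev_det: "ev Q s p xs = Some a \<Longrightarrow> ev Q' s' p xs = Some b \<Longrightarrow> Q \<subseteq>\<^sub>m Q' \<Longrightarrow> a = b"
proof -
  assume a: "ev Q s p xs = Some a" and b: "ev Q' s' p xs = Some b" and le: "Q \<subseteq>\<^sub>m Q'"
  have "ev Q' (max s s') p xs = Some a" using ev_mono[OF a le] by simp
  moreover have "ev Q' (max s s') p xs = Some b" using ev_fuel_mono[OF b] by simp
  ultimately show "a = b" by simp
qed


lemma pos_0: "pos 0 k = 2 * k" unfolding pos_def by simp

lemma pos_Suc_n: "pos (Suc a) k = 2 * pos a k + 1"
proof -
  have "1 * 1 \<le> 2 ^ a * (2 * k + 1)" by (intro mult_le_mono) auto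
  then show ?thesis unfolding pos_def by (simp add: algebra_simps)
qed

lemma join_list_pos: "a < length Ls \<Longrightarrow> join_list Ls (pos a k) = (Ls ! a) k"
proof (induction Ls arbitrary: a)
  case Nil then show ?case by simp
next
  case (Cons x Ls)
  show ?case
  proof (cases a)
    case 0 then show ?thesis by (simp add: join_def pos_0)
  next
    case (Suc a')
    then show ?thesis using Cons by (simp add: join_def pos_Suc_n)
  qed
qed

lemma join_set_enum:
  assumes "finite F"
  shows "\<exists>Ls. set Ls = F \<and> (\<forall>i. join_set F i = join_list Ls i)"
proof -
  have "\<exists>xs. set xs = F \<and> distinct xs" using finite_distinct_list[OF assms] .
  then have "set (SOME xs. set xs = F \<and> distinct xs) = F" by (metis (mono_tags, lifting) someI_ex)
  then show ?thesis unfolding join_set_def by blast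
qed

lemma fin_support_sub: "{x. f x \<noteq> (0::nat)} \<subseteq> A \<Longrightarrow> finite A \<Longrightarrow> finite {x. f x \<noteq> 0}"
  using finite_subset by blast

lemma Om_rf:
  fixes q X
  defines "F \<equiv> X ` {..<cm q}"
  defines "g \<equiv> (\<lambda>i. of_bool (join_set F i) :: nat)"
  shows "rf g 3 (\<lambda>ys. cod (Om q X (ys ! 0) (ys ! 1) (ys ! 2)))"
proof -
  obtain Ls where Ls: "set Ls = F" "\<forall>i. join_set F i = join_list Ls i"
    using join_set_enum[of F] unfolding F_def by blast
  have "\<forall>n<cm q. \<exists>a. a < length Ls \<and> Ls ! a = X n"
    using Ls(1) unfolding F_def by (metis imageI in_set_conv_nth lessThan_iff)
  then obtain idx0 where idx0: "\<forall>n<cm q. idx0 n < length Ls \<and> Ls ! idx0 n = X n" by metis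
  define idx where "idx n = (if n < cm q then idx0 n else 0)" for n
  have Xg: "of_bool (X n k) = g (pos (idx n) k)" if "n < cm q" for n k
    using that idx0 Ls(2) join_list_pos unfolding g_def idx_def by simp
  define lenT where "lenT n = (if n < cm q then length (ctau q ! n) else 0)" for n
  define tabT where "tabT n k = (of_bool (n < cm q \<and> k < length (ctau q ! n) \<and> ctau q ! n ! k) :: nat)" for n k
  define lenS where "lenS n = (if cm q \<le> n then length (csig q n) else 0)" for n
  define tabS where "tabS n k = (of_bool (cm q \<le> n \<and> k < length (csig q n) \<and> csig q n ! k) :: nat)" for n k
  define M where "M = length (snd (snd q))"
  have f1: "finite {n. lenT n \<noteq> 0}" by (rule fin_support_sub[of _ "{..<cm q}"]) (auto simp: lenT_def)
  have f2: "finite {n. idx n \<noteq> 0}" by (rule fin_support_sub[of _ "{..<cm q}"]) (auto simp: idx_def)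
  have f3: "finite {n. lenS n \<noteq> 0}" by (rule fin_support_sub[of _ "{..<M}"]) (auto simp: lenS_def M_def csig_def)
  have f4: "finite {(n, k). tabT n k \<noteq> 0}"
    by (rule finite_subset[of _ "Sigma {..<cm q} (\<lambda>n. {..<length (ctau q ! n)})"]) (auto simp: tabT_def)
  have f5: "finite {(n, k). tabS n k \<noteq> 0}"
    by (rule finite_subset[of _ "Sigma {..<M} (\<lambda>n. {..<length (csig q n)})"]) (auto simp: tabS_def M_def csig_def split: if_splits)
  define codO where "codO i = (if pcol i < cm q then Suc (if prow i < lenT (pcol i) then tabT (pcol i) (prow i)
        else g (pos (idx (pcol i)) (prow i)))
      else if prow i < lenS (pcol i) then Suc (tabS (pcol i) (prow i)) else 0)" for i
  have codO: "cod (Oq q X i) = codO i" for i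
    unfolding Oq_def codO_def lenT_def tabT_def lenS_def tabS_def using Xg by auto
  have codOm: "cod (Om q X c L i) = (if codO i = 0 then (if i < L then Suc (of_bool (odd (c div 2 ^ i))) else 0) else codO i)" for c L i
    unfolding Om_def codO[symmetric] by (cases "Oq q X i") (auto simp: bit_iff_odd)
  have rcodO: "rf g 3 (\<lambda>ys. codO (ys ! 2))"
    unfolding codO_def
    by (intro rf_if rp_less rf_pcol rf_prow rf_proj rf_const rf_Suc rf_fin1[OF f1] rf_fin2[OF f4] rf_orac rf_pos
        rf_fin1[OF f2] rf_fin1[OF f3] rf_fin2[OF f5]) auto
  have "rf g 3 (\<lambda>ys. if codO (ys ! 2) = 0 then (if ys ! 2 < ys ! 1 then Suc (of_bool (odd (ys ! 0 div 2 ^ (ys ! 2)))) else 0) else codO (ys ! 2))"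
    by (intro rf_if rp_eq rp_less rcodO rf_const rf_proj rf_Suc rf_of_bool rp_odd_div) auto
  then show ?thesis by (rule rf_cong) (simp add: codOm)
qed


definition Pc :: "cnd \<Rightarrow> (nat \<Rightarrow> nat \<Rightarrow> bool) \<Rightarrow> prog \<Rightarrow> nat \<Rightarrow> nat \<Rightarrow> nat \<Rightarrow> bool" where
  "Pc q X p st k t \<longleftrightarrow> prow st \<le> pcol (prow t) \<and> pcol st mod 2 ^ prow st = pcol t mod 2 ^ prow st \<and>
     ev (Om q X (pcol t) (pcol (prow t))) (prow (prow t)) p [k] \<noteq> None"

definition tt :: "cnd \<Rightarrow> (nat \<Rightarrow> nat \<Rightarrow> bool) \<Rightarrow> prog \<Rightarrow> nat \<Rightarrow> nat \<Rightarrow> nat" where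
  "tt q X p st k = (LEAST t. Pc q X p st k t)"

definition nxt :: "cnd \<Rightarrow> (nat \<Rightarrow> nat \<Rightarrow> bool) \<Rightarrow> prog \<Rightarrow> nat \<Rightarrow> nat \<Rightarrow> nat" where
  "nxt q X p st k = pos (pcol (tt q X p st k)) (pcol (prow (tt q X p st k)))"

definition outv :: "cnd \<Rightarrow> (nat \<Rightarrow> nat \<Rightarrow> bool) \<Rightarrow> prog \<Rightarrow> nat \<Rightarrow> nat \<Rightarrow> nat" where
  "outv q X p st k = cod (ev (Om q X (pcol (tt q X p st k)) (pcol (prow (tt q X p st k))))
      (prow (prow (tt q X p st k))) p [k]) - 1"

definition stt :: "cnd \<Rightarrow> (nat \<Rightarrow> nat \<Rightarrow> bool) \<Rightarrow> prog \<Rightarrow> nat \<Rightarrow> nat \<Rightarrow> nat" where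
  "stt q X p st0 k = rec_nat st0 (\<lambda>j r. nxt q X p r j) k"

definition ypath :: "cnd \<Rightarrow> (nat \<Rightarrow> nat \<Rightarrow> bool) \<Rightarrow> prog \<Rightarrow> nat \<Rightarrow> nat \<Rightarrow> bool" where
  "ypath q X p st0 k = (outv q X p (stt q X p st0 k) k \<noteq> 0)"

lemma rf_comp4:
  assumes "rf g 4 H" "rf g n A" "rf g n B" "rf g n C" "rf g n D"
  shows "rf g n (\<lambda>xs. H [A xs, B xs, C xs, D xs])"
  using rf_comp[OF assms(1), of "[A,B,C,D]"] assms(2-5) by auto

lemma ypath_rf:
  assumes Pex: "\<And>st k. \<exists>t. Pc q X p st k t"
  shows "turing_le (ypath q X p st0) (join_set (X ` {..<cm q}))"
proof -
  define g where "g = (\<lambda>i. of_bool (join_set (X ` {..<cm q}) i) :: nat)"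
  have W: "rf g 3 (\<lambda>ys. cod (Om q X (ys ! 0) (ys ! 1) (ys ! 2)))"
    unfolding g_def by (rule Om_rf)
  have E: "rf g (1 + 3) (Ev (Om q X) p)" by (rule ev_rf[OF W])
  have Ev4: "Ev (Om q X) p [a, b, c, d] = cod (ev (Om q X b c) a p [d])" for a b c d
    unfolding Ev_def by simp
  have EvE: "rf g n (\<lambda>xs. cod (ev (Om q X (B xs) (C xs)) (A xs) p [D xs]))"
    if "rf g n A" "rf g n B" "rf g n C" "rf g n D" for n A B C D
    using rf_comp4[OF E[simplified] that] by (simp add: Ev4)
  have Prp0: "rp g (Suc 2) (\<lambda>ys. prow (ys ! 1) \<le> pcol (prow (ys ! 0)) \<and>
      pcol (ys ! 1) mod 2 ^ prow (ys ! 1) = pcol (ys ! 0) mod 2 ^ prow (ys ! 1) \<and>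
      cod (ev (Om q X (pcol (ys ! 0)) (pcol (prow (ys ! 0)))) (prow (prow (ys ! 0))) p [ys ! 2]) \<noteq> 0)"
    by (intro rp_conj rp_le rp_eq rp_nonzero EvE rf_pcol rf_prow rf_proj rf_mod rf_pow2) auto
  have Prp: "rp g (Suc 2) (\<lambda>ys. Pc q X p (ys ! 1) (ys ! 2) (ys ! 0))"
    by (rule rp_cong[OF Prp0]) (simp add: Pc_def cod_0_iff)
  have ttrf: "rf g 2 (\<lambda>xs. tt q X p (xs ! 0) (xs ! 1))"
  proof -
    have "rf g 2 (\<lambda>xs. LEAST t. (\<lambda>ys. Pc q X p (ys ! 1) (ys ! 2) (ys ! 0)) (t # xs))"
      by (rule rf_least_pred[OF Prp]) (simp add: Pex)
    then show ?thesis unfolding tt_def by simp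
  qed
  have ttrf': "rf g n (\<lambda>xs. tt q X p (A xs) (B xs))" if "rf g n A" "rf g n B" for n A B
    by (rule lift2[OF ttrf that])
  have nxtrf: "rf g 3 (\<lambda>xs. nxt q X p (xs ! 1) (xs ! 0))"
    unfolding nxt_def by (intro rf_pos rf_pcol rf_prow ttrf' rf_proj) auto
  have outrf: "rf g 2 (\<lambda>xs. outv q X p (xs ! 0) (xs ! 1))"
    unfolding outv_def by (intro rf_pred EvE rf_pos rf_pcol rf_prow ttrf' rf_proj) auto
  have sttrf: "rf g 1 (\<lambda>xs. stt q X p st0 (xs ! 0))"
  proof -
    have "rf g 1 (\<lambda>xs. rec_nat st0 (\<lambda>j r. (\<lambda>zs. nxt q X p (zs ! 1) (zs ! 0)) (j # r # xs)) (xs ! 0))"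
      by (rule rf_recnat[OF rf_const _ rf_proj]) (use nxtrf in \<open>simp_all add: numeral_3_eq_3\<close>)
    then show ?thesis unfolding stt_def by simp
  qed
  have "rf g 1 (\<lambda>xs. of_bool (outv q X p (stt q X p st0 (xs ! 0)) (xs ! 0) \<noteq> 0))"
    by (intro rf_of_bool rp_nonzero lift2[OF outrf] sttrf rf_proj) auto
  then obtain f where f: "rec_in g 1 f" "\<forall>xs. length xs = 1 \<longrightarrow> f xs = of_bool (outv q X p (stt q X p st0 (xs ! 0)) (xs ! 0) \<noteq> 0)"
    unfolding rf_def by blast
  show ?thesis unfolding turing_le_def
    using f unfolding g_def ypath_def by (intro exI[of _ f]) auto
qed


definition conv :: "(nat \<Rightarrow> nat option) \<Rightarrow> prog \<Rightarrow> nat list \<Rightarrow> bool" where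
  "conv Q p v \<longleftrightarrow> (\<forall>k<length v. \<exists>s. ev Q s p [k] = Some (v ! k))"

definition bitsv :: "nat list \<Rightarrow> bool list" where
  "bitsv v = map (\<lambda>b. b \<noteq> 0) v"

definition Dp :: "bool list set \<Rightarrow> prog \<Rightarrow> cnd \<Rightarrow> (nat \<Rightarrow> nat \<Rightarrow> bool) \<Rightarrow> bool" where
  "Dp T p q X \<longleftrightarrow>
     (\<exists>k. \<forall>q'. sext q q' \<longrightarrow> (\<forall>s. ev (Oq q' X) s p [k] = None))
   \<or> (\<exists>v. conv (Oq q X) p v \<and> bitsv v \<notin> T)
   \<or> (\<forall>q' v. sext q q' \<longrightarrow> conv (Oq q' X) p v \<longrightarrow> (\<exists>j<cm q. bitsv v = map (X j) [0..<length v]))"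

lemma Pc_ex:
  assumes nA: "\<And>q'. sext q q' \<Longrightarrow> \<forall>k. \<exists>q''. sext q' q'' \<and> (\<exists>s. ev (Oq q'' X) s p [k] \<noteq> None)"
  shows "\<exists>t. Pc q X p st k t"
proof -
  let ?c = "pcol st" and ?L = "prow st"
  obtain q' where q': "sext q q'" "Oq q' X = Om q X ?c ?L" using Om_repr by blast
  obtain q'' s where q'': "sext q' q''" "ev (Oq q'' X) s p [k] \<noteq> None" using nA[OF q'(1)] by blast
  then obtain w where w: "ev (Oq q'' X) s p [k] = Some w" by auto
  obtain N where N: "ev (restr N (Oq q'' X)) s p [k] = Some w" using ev_use[OF w] by blast
  have s2: "sext q q''" using sext_trans q'(1) q''(1) by blast
  have le: "Om q X ?c ?L \<subseteq>\<^sub>m Oq q'' X" using sext_le[OF q''(1), of X] q'(2) by simp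
  obtain c' L' where cL: "?L \<le> L'" "?c mod 2 ^ ?L = c' mod 2 ^ ?L" "restr N (Oq q'' X) \<subseteq>\<^sub>m Om q X c' L'"
    using Om_extend[OF s2 le, of N] by blast
  have "ev (Om q X c' L') s p [k] = Some w" using ev_mono[OF N cL(3)] by simp
  then have "Pc q X p st k (pos c' (pos L' s))"
    unfolding Pc_def using cL by (simp add: pcol_pos prow_pos)
  then show ?thesis by blast
qed

lemma Pc_tt: "(\<And>st k. \<exists>t. Pc q X p st k t) \<Longrightarrow> Pc q X p st k (tt q X p st k)"
  unfolding tt_def by (rule LeastI_ex) blast

lemma stt_0: "stt q X p st0 0 = st0" unfolding stt_def by simp
lemma stt_Suc: "stt q X p st0 (Suc k) = nxt q X p (stt q X p st0 k) k" unfolding stt_def by simp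

lemma chain_step:
  assumes Pex: "\<And>st k. \<exists>t. Pc q X p st k t"
  shows "Om q X (pcol (stt q X p st0 k)) (prow (stt q X p st0 k)) \<subseteq>\<^sub>m
         Om q X (pcol (stt q X p st0 (Suc k))) (prow (stt q X p st0 (Suc k)))"
proof -
  let ?st = "stt q X p st0 k"
  let ?t = "tt q X p ?st k"
  have P: "Pc q X p ?st k ?t" by (rule Pc_tt[OF Pex])
  have e: "stt q X p st0 (Suc k) = pos (pcol ?t) (pcol (prow ?t))"
    unfolding stt_Suc nxt_def by simp
  show ?thesis unfolding e pcol_pos prow_pos
    by (rule Om_mono) (use P in \<open>auto simp: Pc_def\<close>)
qed

lemma chain_le:
  assumes Pex: "\<And>st k. \<exists>t. Pc q X p st k t" and "j \<le> j'"
  shows "Om q X (pcol (stt q X p st0 j)) (prow (stt q X p st0 j)) \<subseteq>\<^sub>m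
         Om q X (pcol (stt q X p st0 j')) (prow (stt q X p st0 j'))"
  using assms(2)
proof (induction j' rule: dec_induct)
  case base then show ?case by (rule map_le_refl)
next
  case (step j')
  then show ?case using chain_step[OF Pex, of st0 j'] map_le_trans by blast
qed

lemma chain_conv:
  assumes Pex: "\<And>st k. \<exists>t. Pc q X p st k t"
  shows "\<exists>s. ev (Om q X (pcol (stt q X p st0 (Suc k))) (prow (stt q X p st0 (Suc k)))) s p [k]
            = Some (outv q X p (stt q X p st0 k) k)"
proof -
  let ?st = "stt q X p st0 k"
  let ?t = "tt q X p ?st k"
  have P: "Pc q X p ?st k ?t" by (rule Pc_tt[OF Pex])
  then obtain w where w: "ev (Om q X (pcol ?t) (pcol (prow ?t))) (prow (prow ?t)) p [k] = Some w"
    unfolding Pc_def by auto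
  have e: "stt q X p st0 (Suc k) = pos (pcol ?t) (pcol (prow ?t))"
    unfolding stt_Suc nxt_def by simp
  have o: "outv q X p ?st k = w" unfolding outv_def w by simp
  show ?thesis unfolding e pcol_pos prow_pos o using w by blast
qed

lemma density:
  assumes ind: "turing_independent (paths T)" and Xp: "\<forall>j<cm q. X j \<in> paths T"
  shows "\<exists>q'. sext q q' \<and> Dp T p q' X"
proof (rule ccontr)
  assume "\<not> ?thesis"
  then have H: "\<And>q'. sext q q' \<Longrightarrow> \<not> Dp T p q' X" by blast
  have nA: "\<And>q'. sext q q' \<Longrightarrow> \<forall>k. \<exists>q''. sext q' q'' \<and> (\<exists>s. ev (Oq q'' X) s p [k] \<noteq> None)"
  proof -
    fix q' assume "sext q q'"
    then have "\<not> (\<exists>k. \<forall>q''. sext q' q'' \<longrightarrow> (\<forall>s. ev (Oq q'' X) s p [k] = None))"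
      using H unfolding Dp_def by blast
    then show "\<forall>k. \<exists>q''. sext q' q'' \<and> (\<exists>s. ev (Oq q'' X) s p [k] \<noteq> None)" by blast
  qed
  have nB: "\<And>q' v. sext q q' \<Longrightarrow> conv (Oq q' X) p v \<Longrightarrow> bitsv v \<in> T"
    using H unfolding Dp_def by blast
  have "\<not> (\<forall>q' v. sext q q' \<longrightarrow> conv (Oq q' X) p v \<longrightarrow> (\<exists>j<cm q. bitsv v = map (X j) [0..<length v]))"
    using H[OF sext_refl] unfolding Dp_def by blast
  then obtain q1 v1 where q1: "sext q q1" "conv (Oq q1 X) p v1"
    "\<forall>j<cm q. bitsv v1 \<noteq> map (X j) [0..<length v1]" by blast
  have Pex: "\<And>st k. \<exists>t. Pc q X p st k t" by (rule Pc_ex[OF nA])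
  have "\<forall>k<length v1. \<exists>N. \<exists>s. ev (restr N (Oq q1 X)) s p [k] = Some (v1 ! k)"
    using q1(2) ev_use unfolding conv_def by blast
  moreover have "\<And>k N N'. k < length v1 \<Longrightarrow> (\<exists>s. ev (restr N (Oq q1 X)) s p [k] = Some (v1 ! k)) \<Longrightarrow> N \<le> N' \<Longrightarrow>
      (\<exists>s. ev (restr N' (Oq q1 X)) s p [k] = Some (v1 ! k))"
    using ev_restr_mono by blast
  ultimately obtain N where N: "\<forall>k<length v1. \<exists>s. ev (restr N (Oq q1 X)) s p [k] = Some (v1 ! k)"
    using ex_uniform_nat[of "length v1" "\<lambda>k N. \<exists>s. ev (restr N (Oq q1 X)) s p [k] = Some (v1 ! k)"]
    by blast
  have le0: "Om q X 0 0 \<subseteq>\<^sub>m Oq q1 X" using Om_0[of q X 0] sext_le[OF q1(1), of X] by simp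
  obtain c1 L1 where c1: "restr N (Oq q1 X) \<subseteq>\<^sub>m Om q X c1 L1"
    using Om_extend[OF q1(1) le0, of N] by blast
  define st0 where "st0 = pos c1 L1"
  define y where "y = ypath q X p st0"
  have O0: "Om q X (pcol (stt q X p st0 0)) (prow (stt q X p st0 0)) = Om q X c1 L1"
    by (simp add: stt_0 st0_def pcol_pos prow_pos)
  have convl: "conv (Om q X (pcol (stt q X p st0 l)) (prow (stt q X p st0 l))) p
                 (map (\<lambda>k. outv q X p (stt q X p st0 k) k) [0..<l])" for l
    unfolding conv_def
  proof (intro allI impI)
    fix k assume k: "k < length (map (\<lambda>k. outv q X p (stt q X p st0 k) k) [0..<l])"
    then have kl: "Suc k \<le> l" by simp
    obtain s where s: "ev (Om q X (pcol (stt q X p st0 (Suc k))) (prow (stt q X p st0 (Suc k)))) s p [k]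
            = Some (outv q X p (stt q X p st0 k) k)" using chain_conv[OF Pex] by blast
    have "ev (Om q X (pcol (stt q X p st0 l)) (prow (stt q X p st0 l))) s p [k] = Some (outv q X p (stt q X p st0 k) k)"
      by (rule ev_mono[OF s chain_le[OF Pex kl] order_refl])
    then show "\<exists>s. ev (Om q X (pcol (stt q X p st0 l)) (prow (stt q X p st0 l))) s p [k] =
        Some (map (\<lambda>k. outv q X p (stt q X p st0 k) k) [0..<l] ! k)" using k by auto
  qed
  have yT: "y \<in> paths T"
    unfolding paths_def
  proof (intro CollectI allI)
    fix l
    obtain q' where q': "sext q q'" "Oq q' X = Om q X (pcol (stt q X p st0 l)) (prow (stt q X p st0 l))"
      using Om_repr by blast
    have "bitsv (map (\<lambda>k. outv q X p (stt q X p st0 k) k) [0..<l]) \<in> T"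
      using nB[OF q'(1)] convl[of l] q'(2) by simp
    moreover have "bitsv (map (\<lambda>k. outv q X p (stt q X p st0 k) k) [0..<l]) = map y [0..<l]"
      unfolding bitsv_def y_def ypath_def by simp
    ultimately show "map y [0..<l] \<in> T" by simp
  qed
  have yv: "outv q X p (stt q X p st0 k) k = v1 ! k" if k: "k < length v1" for k
  proof -
    obtain s where s: "ev (restr N (Oq q1 X)) s p [k] = Some (v1 ! k)" using N k by blast
    have le: "restr N (Oq q1 X) \<subseteq>\<^sub>m Om q X (pcol (stt q X p st0 (Suc k))) (prow (stt q X p st0 (Suc k)))"
      using c1 chain_le[OF Pex, of 0 "Suc k" st0] O0 map_le_trans by auto
    obtain s' where s': "ev (Om q X (pcol (stt q X p st0 (Suc k))) (prow (stt q X p st0 (Suc k)))) s' p [k]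
            = Some (outv q X p (stt q X p st0 k) k)" using chain_conv[OF Pex] by blast
    show ?thesis using ev_det[OF s s' le] by simp
  qed
  have ymap: "map y [0..<length v1] = bitsv v1"
    unfolding bitsv_def y_def ypath_def using yv by (auto intro!: nth_equalityI)
  have yF: "y \<notin> X ` {..<cm q}"
  proof
    assume "y \<in> X ` {..<cm q}"
    then obtain j where j: "j < cm q" "y = X j" by auto
    then have "bitsv v1 = map (X j) [0..<length v1]" using ymap by simp
    with q1(3) j(1) show False by blast
  qed
  have tl: "turing_le y (join_set (X ` {..<cm q}))"
    unfolding y_def by (rule ypath_rf[OF Pex])
  have "finite (X ` {..<cm q})" by simp
  moreover have "X ` {..<cm q} \<subseteq> paths T" using Xp by auto
  ultimately have "\<not> turing_le y (join_set (X ` {..<cm q}))"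
    using ind yT yF unfolding turing_independent_def by blast
  with tl show False by blast
qed


instance prog :: countable by countable_datatype

definition commit :: "cnd \<Rightarrow> cnd" where
  "commit q = (Suc (cm q), ctau q @ [csig q (cm q)], snd (snd q))"

definition meet :: "bool list set \<Rightarrow> prog \<Rightarrow> cnd \<Rightarrow> (nat \<Rightarrow> nat \<Rightarrow> bool) \<Rightarrow> cnd" where
  "meet T p q X = (if \<exists>i. sext q (from_nat i) \<and> Dp T p (from_nat i) X
     then from_nat (LEAST i. sext q (from_nat i) \<and> Dp T p (from_nat i) X) else q)"

primrec stage :: "bool list set \<Rightarrow> (nat \<Rightarrow> nat \<Rightarrow> bool) \<Rightarrow> nat \<Rightarrow> cnd" where
  "stage T X 0 = (0, [], [])"
| "stage T X (Suc e) = meet T (from_nat e) (commit (stage T X e)) X"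

declare stage.simps(2)[simp del]

definition hfun :: "bool list set \<Rightarrow> (nat \<Rightarrow> nat \<Rightarrow> bool) \<Rightarrow> nat \<Rightarrow> bool" where
  "hfun T X i = (if prow i < length (ctau (stage T X (Suc (pcol i))) ! pcol i)
      then ctau (stage T X (Suc (pcol i))) ! pcol i ! prow i else X (pcol i) (prow i))"

lemma cm_commit: "cm (commit q) = Suc (cm q)" unfolding commit_def cm_def by simp
lemma ctau_commit: "ctau (commit q) = ctau q @ [csig q (cm q)]" unfolding commit_def ctau_def by simp
lemma csig_commit: "csig (commit q) n = csig q n" unfolding commit_def csig_def by simp

lemma sext_meet: "sext q (meet T p q X)"
proof (cases "\<exists>i. sext q (from_nat i) \<and> Dp T p (from_nat i) X")
  case True
  then have "sext q (from_nat (LEAST i. sext q (from_nat i) \<and> Dp T p (from_nat i) X)) \<and>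
     Dp T p (from_nat (LEAST i. sext q (from_nat i) \<and> Dp T p (from_nat i) X)) X"
    by (rule LeastI_ex)
  then show ?thesis using True unfolding meet_def by simp
next
  case False
  then show ?thesis unfolding meet_def by (subst if_not_P[OF False]) (rule sext_refl)
qed

lemma stage_sext: "sext (commit (stage T X e)) (stage T X (Suc e))"
  unfolding stage.simps(2) by (rule sext_meet)

lemma Dp_meet: "\<exists>q'. sext q q' \<and> Dp T p q' X \<Longrightarrow> Dp T p (meet T p q X) X"
proof -
  assume "\<exists>q'. sext q q' \<and> Dp T p q' X"
  then obtain q' where "sext q q'" "Dp T p q' X" by blast
  then have ex: "\<exists>i. sext q (from_nat i) \<and> Dp T p (from_nat i) X"
    by (intro exI[of _ "to_nat q'"]) simp
  then have "sext q (from_nat (LEAST i. sext q (from_nat i) \<and> Dp T p (from_nat i) X)) \<and>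
     Dp T p (from_nat (LEAST i. sext q (from_nat i) \<and> Dp T p (from_nat i) X)) X"
    by (rule LeastI_ex)
  then show ?thesis using ex unfolding meet_def by simp
qed

lemma stage_cm: "cm (stage T X e) = e \<and> length (ctau (stage T X e)) = e"
proof (induction e)
  case 0 then show ?case by (simp add: cm_def ctau_def)
next
  case (Suc e)
  have s: "sext (commit (stage T X e)) (stage T X (Suc e))" by (rule stage_sext)
  then show ?case using Suc unfolding sext_def by (simp add: cm_commit ctau_commit)
qed

lemma stage_ctau_Suc: "ctau (stage T X (Suc e)) = ctau (stage T X e) @ [csig (stage T X e) e]"
proof -
  have s: "sext (commit (stage T X e)) (stage T X (Suc e))" by (rule stage_sext)
  then show ?thesis using stage_cm[of T X e] unfolding sext_def by (simp add: ctau_commit)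
qed

lemma stage_ctau_mono: "e \<le> e' \<Longrightarrow> n < e \<Longrightarrow> ctau (stage T X e') ! n = ctau (stage T X e) ! n"
proof (induction e' rule: dec_induct)
  case base then show ?case by simp
next
  case (step e')
  then show ?case using stage_cm[of T X e'] by (simp add: stage_ctau_Suc nth_append)
qed

lemma stage_csig_mono: "e \<le> e' \<Longrightarrow> e' \<le> n \<Longrightarrow> prefix (csig (stage T X e) n) (csig (stage T X e') n)"
proof (induction e' rule: dec_induct)
  case base then show ?case by simp
next
  case (step e')
  have s: "sext (commit (stage T X e')) (stage T X (Suc e'))" by (rule stage_sext)
  have "prefix (csig (commit (stage T X e')) n) (csig (stage T X (Suc e')) n)"
    using s step.prems stage_cm[of T X e'] unfolding sext_def by (simp add: cm_commit)
  then have "prefix (csig (stage T X e') n) (csig (stage T X (Suc e')) n)" by (simp add: csig_commit)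
  moreover have "prefix (csig (stage T X e) n) (csig (stage T X e') n)" using step by simp
  ultimately show ?case using prefix_order.order_trans by blast
qed

lemma stage_ctau_n: "ctau (stage T X (Suc n)) ! n = csig (stage T X n) n"
  using stage_cm[of T X n] by (simp add: stage_ctau_Suc nth_append)

lemma Oq_stage_le: "Oq (stage T X e) X \<subseteq>\<^sub>m (\<lambda>i. Some (of_bool (hfun T X i)))"
proof (unfold map_le_def, intro ballI)
  fix i assume i: "i \<in> dom (Oq (stage T X e) X)"
  let ?n = "pcol i" and ?k = "prow i"
  show "Oq (stage T X e) X i = Some (of_bool (hfun T X i))"
  proof (cases "?n < e")
    case True
    have "ctau (stage T X e) ! ?n = ctau (stage T X (Suc ?n)) ! ?n"
      using stage_ctau_mono[of "Suc ?n" e ?n T X] True by simp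
    then show ?thesis using True stage_cm[of T X e] unfolding Oq_def hfun_def by simp
  next
    case False
    then have k: "?k < length (csig (stage T X e) ?n)" using i stage_cm[of T X e]
      unfolding Oq_def by (auto split: if_splits)
    have "prefix (csig (stage T X e) ?n) (ctau (stage T X (Suc ?n)) ! ?n)"
      using stage_csig_mono[of e ?n ?n T X] False by (simp add: stage_ctau_n)
    then obtain zs where zs: "ctau (stage T X (Suc ?n)) ! ?n = csig (stage T X e) ?n @ zs"
      unfolding prefix_def by blast
    show ?thesis using False k stage_cm[of T X e] unfolding Oq_def hfun_def zs
      by (simp add: nth_append)
  qed
qed


lemma stage_Dp:
  assumes ind: "turing_independent (paths T)" and XT: "\<forall>n. X n \<in> paths T"
  shows "Dp T (from_nat e) (stage T X (Suc e)) X"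
proof -
  have "\<exists>q'. sext (commit (stage T X e)) q' \<and> Dp T (from_nat e) q' X"
    by (rule density[OF ind]) (use XT in auto)
  then show ?thesis unfolding stage.simps(2) by (rule Dp_meet)
qed

lemma Oq_same_committed:
  "cm q' = cm q \<Longrightarrow> ctau q' = ctau q \<Longrightarrow> pcol i < cm q \<Longrightarrow> Oq q' X i = Oq q X i"
  unfolding Oq_def by simp

lemma Oq_committed_some: "pcol i < cm q \<Longrightarrow> Oq q X i \<noteq> None"
  unfolding Oq_def by simp

lemma approx_cond:
  fixes Gb :: "nat \<Rightarrow> bool"
  assumes le: "Oq q X \<subseteq>\<^sub>m (\<lambda>i. Some (of_bool (Gb i)))"
  shows "\<exists>q'. sext q q' \<and> Oq q' X \<subseteq>\<^sub>m (\<lambda>i. Some (of_bool (Gb i))) \<and>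
            restr N (\<lambda>i. Some (of_bool (Gb i))) \<subseteq>\<^sub>m Oq q' X"
proof -
  let ?G = "\<lambda>i. Some (of_bool (Gb i)) :: nat option"
  let ?M = "max N (length (snd (snd q)))"
  define sg where "sg = map (\<lambda>n. if n < cm q then csig q n
      else map (\<lambda>k. Gb (pos n k)) [0..<max N (length (csig q n))]) [0..<?M]"
  define q' where "q' = (cm q, ctau q, sg)"
  have cm': "cm q' = cm q" and ct': "ctau q' = ctau q" unfolding q'_def cm_def ctau_def by simp_all
  have cs': "csig q' n = (if n < ?M then (if n < cm q then csig q n
      else map (\<lambda>k. Gb (pos n k)) [0..<max N (length (csig q n))]) else [])" for n
    unfolding q'_def csig_def sg_def by simp
  have sigG: "csig q n ! k = Gb (pos n k)" if "cm q \<le> n" "k < length (csig q n)" for n k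
  proof -
    have "Oq q X (pos n k) = Some (of_bool (csig q n ! k))" using that by (simp add: Oq_pos)
    then have "Some (of_bool (csig q n ! k)) = (?G (pos n k) :: nat option)"
      using le unfolding map_le_def by (metis domI)
    then show ?thesis by (cases "csig q n ! k"; cases "Gb (pos n k)") simp_all
  qed
  have sx: "sext q q'"
    unfolding sext_def cm' ct'
  proof (intro conjI allI impI refl)
    fix n assume n: "cm q \<le> n"
    show "prefix (csig q n) (csig q' n)"
    proof (cases "n < ?M")
      case True
      let ?L = "map (\<lambda>k. Gb (pos n k)) [0..<max N (length (csig q n))]"
      have eq1: "csig q n = take (length (csig q n)) ?L"
        using sigG[OF n] by (auto intro!: nth_equalityI)
      have eq2: "csig q' n = ?L" unfolding cs' using True n by simp
      have "prefix (take (length (csig q n)) ?L) ?L" by (rule take_is_prefix)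
      then show ?thesis using eq1 eq2 by metis
    next
      case False
      then show ?thesis unfolding cs' by (simp add: csig_beyond)
    qed
  qed
  have l1: "Oq q' X \<subseteq>\<^sub>m ?G"
  proof (unfold map_le_def, intro ballI)
    fix i assume i: "i \<in> dom (Oq q' X)"
    show "Oq q' X i = ?G i"
    proof (cases "pcol i < cm q")
      case True
      then have "Oq q' X i = Oq q X i" by (rule Oq_same_committed[OF cm' ct'])
      moreover have "i \<in> dom (Oq q X)" using Oq_committed_some[OF True] by auto
      ultimately show ?thesis using le unfolding map_le_def by simp
    next
      case False
      have d: "prow i < length (csig q' (pcol i))" and v: "Oq q' X i = Some (of_bool (csig q' (pcol i) ! prow i))"
        using i False cm' unfolding Oq_def by (auto split: if_splits)
      have M: "pcol i < ?M" using d cs'[of "pcol i"] by (auto split: if_splits)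
      then have "csig q' (pcol i) ! prow i = Gb (pos (pcol i) (prow i))" using d False cs'[of "pcol i"] by simp
      then show ?thesis using v by (simp add: pos_pcol_prow)
    qed
  qed
  have l2: "restr N ?G \<subseteq>\<^sub>m Oq q' X"
  proof (unfold map_le_def, intro ballI)
    fix i assume "i \<in> dom (restr N ?G)"
    then have iN: "i < N" by (auto simp: restr_def split: if_splits)
    have nN: "pcol i < N" using pcol_le[of i] iN by simp
    have kN: "prow i < N" using prow_le[of i] iN by simp
    show "restr N ?G i = Oq q' X i"
    proof (cases "pcol i < cm q")
      case True
      then have "Oq q' X i = Oq q X i" by (rule Oq_same_committed[OF cm' ct'])
      moreover have "i \<in> dom (Oq q X)" using Oq_committed_some[OF True] by auto
      ultimately show ?thesis using le iN unfolding map_le_def restr_def by simp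
    next
      case False
      have "Oq q' X (pos (pcol i) (prow i)) = Some (of_bool (Gb (pos (pcol i) (prow i))))"
        unfolding Oq_pos cm' ct' cs' using False nN kN by (simp add: less_max_iff_disj)
      then show ?thesis using iN by (simp add: pos_pcol_prow restr_def)
    qed
  qed
  show ?thesis using sx l1 l2 by blast
qed

lemma map_upt_mono_neq:
  "map (y::nat \<Rightarrow> bool) [0..<l] \<noteq> map x [0..<l] \<Longrightarrow> l \<le> l' \<Longrightarrow> map y [0..<l'] \<noteq> map x [0..<l']"
proof -
  assume a: "map y [0..<l] \<noteq> map x [0..<l]" and l: "l \<le> l'"
  have "take l (map y [0..<l']) = map y [0..<l]" "take l (map x [0..<l']) = map x [0..<l]"
    using l by (simp_all add: take_map)
  then show ?thesis using a by metis
qed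

lemma final_neg:
  assumes ind: "turing_independent (paths T)" and XT: "\<forall>n. X n \<in> paths T"
    and yT: "y \<in> paths T" and yr: "y \<notin> range X" and tl: "turing_le y (hfun T X)"
  shows False
proof -
  let ?Gb = "hfun T X"
  let ?g = "\<lambda>i. of_bool (?Gb i) :: nat"
  let ?G = "\<lambda>i. Some (of_bool (?Gb i)) :: nat option"
  obtain f where f: "rec_in ?g 1 f" and fy: "\<forall>n. f [n] = of_bool (y n)"
    using tl unfolding turing_le_def by blast
  obtain p where p: "computes ?g 1 f p" using rec_prog[OF f] by blast
  have conv1: "\<exists>s. ev ?G s p [k] = Some (f [k])" for k
    using p unfolding computes_def by simp
  let ?q = "stage T X (Suc (to_nat p))"
  have D: "Dp T p ?q X" using stage_Dp[OF ind XT, of "to_nat p"] by simp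
  have Oqle: "Oq ?q X \<subseteq>\<^sub>m ?G" by (rule Oq_stage_le)
  have bitsf: "bitsv (map (\<lambda>k. f [k]) [0..<l]) = map y [0..<l]" for l
    unfolding bitsv_def using fy by simp
  have K: "\<exists>q'. sext ?q q' \<and> Oq q' X \<subseteq>\<^sub>m ?G \<and> conv (Oq q' X) p (map (\<lambda>k. f [k]) [0..<l])" for l
  proof -
    have "\<forall>k<l. \<exists>N. \<exists>s. ev (restr N ?G) s p [k] = Some (f [k])"
      using conv1 ev_use by blast
    moreover have "\<And>k N N'. k < l \<Longrightarrow> (\<exists>s. ev (restr N ?G) s p [k] = Some (f [k])) \<Longrightarrow> N \<le> N' \<Longrightarrow>
      (\<exists>s. ev (restr N' ?G) s p [k] = Some (f [k]))"
      using ev_restr_mono by blast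
    ultimately obtain N where N: "\<forall>k<l. \<exists>s. ev (restr N ?G) s p [k] = Some (f [k])"
      using ex_uniform_nat[of l "\<lambda>k N. \<exists>s. ev (restr N ?G) s p [k] = Some (f [k])"] by blast
    obtain q' where q': "sext ?q q'" "Oq q' X \<subseteq>\<^sub>m ?G" "restr N ?G \<subseteq>\<^sub>m Oq q' X"
      using approx_cond[OF Oqle, of N] by blast
    have "conv (Oq q' X) p (map (\<lambda>k. f [k]) [0..<l])"
      unfolding conv_def
    proof (intro allI impI)
      fix k assume "k < length (map (\<lambda>k. f [k]) [0..<l])"
      then have k: "k < l" by simp
      obtain s where "ev (restr N ?G) s p [k] = Some (f [k])" using N k by blast
      then have "ev (Oq q' X) s p [k] = Some (f [k])" using ev_mono[OF _ q'(3) order_refl] by blast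
      then show "\<exists>s. ev (Oq q' X) s p [k] = Some (map (\<lambda>k. f [k]) [0..<l] ! k)" using k by auto
    qed
    then show ?thesis using q' by blast
  qed
  from D show False unfolding Dp_def
  proof (elim disjE)
    assume "\<exists>k. \<forall>q'. sext ?q q' \<longrightarrow> (\<forall>s. ev (Oq q' X) s p [k] = None)"
    then obtain k where k: "\<forall>q'. sext ?q q' \<longrightarrow> (\<forall>s. ev (Oq q' X) s p [k] = None)" by blast
    obtain q' where q': "sext ?q q'" "conv (Oq q' X) p (map (\<lambda>k. f [k]) [0..<Suc k])" using K by blast
    then obtain s where "ev (Oq q' X) s p [k] = Some (map (\<lambda>k. f [k]) [0..<Suc k] ! k)"
      unfolding conv_def by (metis length_map length_upt lessI minus_nat.diff_0)
    moreover have "ev (Oq q' X) s p [k] = None" using k q'(1) by blast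
    ultimately show False by simp
  next
    assume "\<exists>v. conv (Oq ?q X) p v \<and> bitsv v \<notin> T"
    then obtain v where v: "conv (Oq ?q X) p v" "bitsv v \<notin> T" by blast
    have "v = map (\<lambda>k. f [k]) [0..<length v]"
    proof (rule nth_equalityI)
      show "length v = length (map (\<lambda>k. f [k]) [0..<length v])" by simp
      fix k assume k: "k < length v"
      obtain s where s: "ev (Oq ?q X) s p [k] = Some (v ! k)" using v(1) k unfolding conv_def by blast
      obtain s' where s': "ev ?G s' p [k] = Some (f [k])" using conv1 by blast
      show "v ! k = map (\<lambda>k. f [k]) [0..<length v] ! k" using ev_det[OF s s' Oqle] k by simp
    qed
    then have "bitsv v = map y [0..<length v]" using bitsf by metis
    moreover have "map y [0..<length v] \<in> T" using yT unfolding paths_def by blast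
    ultimately show False using v(2) by simp
  next
    assume C: "\<forall>q' v. sext ?q q' \<longrightarrow> conv (Oq q' X) p v \<longrightarrow> (\<exists>j<cm ?q. bitsv v = map (X j) [0..<length v])"
    have Cl: "\<exists>j<cm ?q. map y [0..<l] = map (X j) [0..<l]" for l
    proof -
      obtain q' where q': "sext ?q q'" "conv (Oq q' X) p (map (\<lambda>k. f [k]) [0..<l])" using K by blast
      then show ?thesis using C bitsf by fastforce
    qed
    have ne: "\<forall>j<cm ?q. \<exists>l. map y [0..<l] \<noteq> map (X j) [0..<l]"
    proof (intro allI impI)
      fix j assume "j < cm ?q"
      have "y \<noteq> X j" using yr by auto
      then obtain k where "y k \<noteq> X j k" by blast
      then have "map y [0..<Suc k] \<noteq> map (X j) [0..<Suc k]" by simp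
      then show "\<exists>l. map y [0..<l] \<noteq> map (X j) [0..<l]" by blast
    qed
    obtain l where l: "\<forall>j<cm ?q. map y [0..<l] \<noteq> map (X j) [0..<l]"
      using ex_uniform_nat[of "cm ?q" "\<lambda>j l. map y [0..<l] \<noteq> map (X j) [0..<l]"] ne map_upt_mono_neq
      by blast
    then show False using Cl[of l] by blast
  qed
qed

lemma final_pos: "turing_le (X n) (hfun T X)"
proof -
  let ?g = "\<lambda>i. of_bool (hfun T X i) :: nat"
  let ?tau = "ctau (stage T X (Suc n)) ! n"
  define tab where "tab k = (of_bool (k < length ?tau \<and> X n k) :: nat)" for k
  have fin: "finite {k. tab k \<noteq> 0}"
    by (rule fin_support_sub[of _ "{..<length ?tau}"]) (auto simp: tab_def)
  have hp: "hfun T X (pos n k) = (if k < length ?tau then ?tau ! k else X n k)" for k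
    unfolding hfun_def by (simp add: pcol_pos prow_pos)
  have "rf ?g 1 (\<lambda>xs. if xs ! 0 < length ?tau then tab (xs ! 0) else ?g (pos n (xs ! 0)))"
    by (intro rf_if rp_less rf_proj rf_const rf_fin1[OF fin] rf_orac rf_pos) auto
  then obtain f where f: "rec_in ?g 1 f"
    "\<forall>xs. length xs = 1 \<longrightarrow> f xs = (if xs ! 0 < length ?tau then tab (xs ! 0) else ?g (pos n (xs ! 0)))"
    unfolding rf_def by blast
  have "\<forall>k. f [k] = of_bool (X n k)"
    using f(2) hp unfolding tab_def by auto
  then show ?thesis unfolding turing_le_def using f(1) by blast
qed


abbreviation CM :: "((nat \<Rightarrow> nat \<Rightarrow> bool) \<Rightarrow> 'c) \<Rightarrow> bool" where
  "CM f \<equiv> f \<in> measurable (borel :: (nat \<Rightarrow> nat \<Rightarrow> bool) measure) (count_space UNIV)"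

lemma CM_const: "CM (\<lambda>X. c)"
  by (rule measurable_const) simp

lemma CM_comp: "CM f \<Longrightarrow> CM (\<lambda>X. \<phi> (f X))"
  by (rule measurable_compose[OF _ measurable_count_space])

lemma CM_app:
  fixes g :: "(nat \<Rightarrow> nat \<Rightarrow> bool) \<Rightarrow> 'a::countable"
  shows "(\<And>a. CM (F a)) \<Longrightarrow> CM g \<Longrightarrow> CM (\<lambda>X. F (g X) X)"
  by (rule measurable_compose_countable'[where I=UNIV]) (auto intro: countableI_type)

lemma CM_bin:
  fixes f :: "(nat \<Rightarrow> nat \<Rightarrow> bool) \<Rightarrow> 'a::countable"
  shows "CM f \<Longrightarrow> CM g \<Longrightarrow> CM (\<lambda>X. \<phi> (f X) (g X))"
  by (rule CM_app[of "\<lambda>a X. \<phi> a (g X)" f]) (auto intro: CM_comp)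

lemma CM_all:
  fixes P :: "'i::countable \<Rightarrow> (nat \<Rightarrow> nat \<Rightarrow> bool) \<Rightarrow> bool"
  shows "(\<And>i. CM (P i)) \<Longrightarrow> CM (\<lambda>X. \<forall>i. P i X)"
  using pred_intros_countable(1)[where M=borel and P="\<lambda>X i. P i X"] by blast

lemma CM_ex:
  fixes P :: "'i::countable \<Rightarrow> (nat \<Rightarrow> nat \<Rightarrow> bool) \<Rightarrow> bool"
  shows "(\<And>i. CM (P i)) \<Longrightarrow> CM (\<lambda>X. \<exists>i. P i X)"
  using pred_intros_countable(2)[where M=borel and P="\<lambda>X i. P i X"] by blast

lemma CM_coord: "CM (\<lambda>X. X n k)"
proof -
  have "continuous_on UNIV (\<lambda>X::nat \<Rightarrow> nat \<Rightarrow> bool. X n k)"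
    by (rule continuous_on_product_then_coordinatewise[OF continuous_on_product_coordinates])
  then have "(\<lambda>X::nat \<Rightarrow> nat \<Rightarrow> bool. X n k) \<in> borel_measurable borel"
    by (rule borel_measurable_continuous_onI)
  then show ?thesis using measurable_cong_sets[OF refl sets_borel_eq_count_space] by blast
qed

lemma CM_map:
  assumes "\<And>f. f \<in> set L \<Longrightarrow> CM (\<lambda>X. G f X)"
  shows "CM (\<lambda>X. map (\<lambda>f. (G f X :: 'a::countable)) L)"
  using assms
proof (induction L)
  case Nil then show ?case by (simp add: CM_const)
next
  case (Cons a L)
  have "CM (\<lambda>X. G a X)" using Cons.prems by simp
  moreover have "CM (\<lambda>X. map (\<lambda>f. G f X) L)" using Cons by simp
  ultimately have "CM (\<lambda>X. (\<lambda>u v. u # v) (G a X) (map (\<lambda>f. G f X) L))" by (rule CM_bin)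
  then show ?case by simp
qed

lemma ev_CM:
  assumes O: "\<And>i. CM (\<lambda>X. \<Omega> X i)"
  shows "CM (\<lambda>X. ev (\<Omega> X) s p xs)"
proof (induction p arbitrary: xs)
  case Zero then show ?case by (simp add: CM_const)
next
  case Succ then show ?case by (simp add: CM_const)
next
  case (Proj i) then show ?case by (simp add: CM_const)
next
  case Orac then show ?case by (simp add: O)
next
  case (Comp h fs)
  have R: "CM (\<lambda>X. map (\<lambda>f. ev (\<Omega> X) s f xs) fs)"
    by (rule CM_map) (rule Comp.IH(2))
  have "CM (\<lambda>X. (\<lambda>rs X. if None \<in> set rs then None else ev (\<Omega> X) s h (map the rs))
      (map (\<lambda>f. ev (\<Omega> X) s f xs) fs) X)"
  proof (rule CM_app[OF _ R])
    fix rs :: "nat option list"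
    show "CM (\<lambda>X. if None \<in> set rs then None else ev (\<Omega> X) s h (map the rs))"
      by (cases "None \<in> set rs") (simp_all add: CM_const Comp.IH(1))
  qed
  moreover have e: "map (\<lambda>f. the (ev (\<Omega> X) s f xs)) fs = map the (map (\<lambda>f. ev (\<Omega> X) s f xs) fs)" for X
    by simp
  ultimately show ?case by (simp only: ev.simps e)
next
  case (PRec b t)
  have "CM (\<lambda>X. rec_nat (ev (\<Omega> X) s b (tl xs))
      (\<lambda>k r. case r of None \<Rightarrow> None | Some v \<Rightarrow> ev (\<Omega> X) s t (k # v # tl xs)) k)" for k
  proof (induction k)
    case 0 then show ?case using PRec.IH(1) by simp
  next
    case (Suc k)
    have "CM (\<lambda>X. (\<lambda>r X. case r of None \<Rightarrow> None | Some v \<Rightarrow> ev (\<Omega> X) s t (k # v # tl xs))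
       (rec_nat (ev (\<Omega> X) s b (tl xs))
      (\<lambda>k r. case r of None \<Rightarrow> None | Some v \<Rightarrow> ev (\<Omega> X) s t (k # v # tl xs)) k) X)"
    proof (rule CM_app[OF _ Suc])
      fix r :: "nat option"
      show "CM (\<lambda>X. case r of None \<Rightarrow> None | Some v \<Rightarrow> ev (\<Omega> X) s t (k # v # tl xs))"
        by (cases r) (simp_all add: CM_const PRec.IH(2))
    qed
    then show ?case by simp
  qed
  then show ?case by simp
next
  case (Min f)
  have "CM (\<lambda>X. msearch (\<lambda>t. ev (\<Omega> X) s f (t # xs)) j)" for j
  proof (induction j)
    case 0 then show ?case by (simp add: CM_const)
  next
    case (Suc j)
    have "CM (\<lambda>X. (\<lambda>a b. mstep a j b) (msearch (\<lambda>t. ev (\<Omega> X) s f (t # xs)) j) (ev (\<Omega> X) s f (j # xs)))"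
      by (rule CM_bin[OF Suc Min.IH])
    then show ?case by (simp add: msearch_Suc)
  qed
  then show ?case by (simp add: CM_comp)
qed

lemma CM_conj: "CM P \<Longrightarrow> CM Q \<Longrightarrow> CM (\<lambda>X. P X \<and> Q X)"
  by (rule CM_bin[of P Q "(\<and>)"])
lemma CM_disj: "CM P \<Longrightarrow> CM Q \<Longrightarrow> CM (\<lambda>X. P X \<or> Q X)"
  by (rule CM_bin[of P Q "(\<or>)"])
lemma CM_imp: "CM P \<Longrightarrow> CM Q \<Longrightarrow> CM (\<lambda>X. P X \<longrightarrow> Q X)"
  by (rule CM_bin[of P Q "(\<longrightarrow>)"])
lemma CM_not: "CM P \<Longrightarrow> CM (\<lambda>X. \<not> P X)"
  by (rule CM_comp)
lemma CM_eq:
  fixes f :: "(nat \<Rightarrow> nat \<Rightarrow> bool) \<Rightarrow> 'a::countable"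
  shows "CM f \<Longrightarrow> CM g \<Longrightarrow> CM (\<lambda>X. f X = g X)"
  by (rule CM_bin[of f g "(=)"])
lemma CM_if: "CM P \<Longrightarrow> CM f \<Longrightarrow> CM g \<Longrightarrow> CM (\<lambda>X. if P X then f X else g X)"
proof -
  assume P: "CM P" and f: "CM f" and g: "CM g"
  have "CM (\<lambda>X. (\<lambda>b X. if b then f X else g X) (P X) X)"
  proof (rule CM_app[OF _ P])
    fix b show "CM (\<lambda>X. if b then f X else g X)" using f g by (cases b) simp_all
  qed
  then show ?thesis by simp
qed

lemma Oq_CM: "CM (\<lambda>X. Oq q X i)"
  unfolding Oq_def
  using CM_comp[OF CM_coord[of "pcol i" "prow i"], where \<phi>="\<lambda>b. Some (of_bool b) :: nat option"]
  by (cases "pcol i < cm q"; cases "prow i < length (ctau q ! pcol i)") (simp_all add: CM_const)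

lemma ev_Oq_CM: "CM (\<lambda>X. ev (Oq q X) s p xs)"
  by (rule ev_CM[of "\<lambda>X. Oq q X"]) (rule Oq_CM)

lemma map_coord_CM: "CM (\<lambda>X. map (X j) L)"
proof -
  have "CM (\<lambda>X. map (\<lambda>k. X j k) L)" by (rule CM_map) (rule CM_coord)
  then show ?thesis by simp
qed

lemma Dp_CM: "CM (\<lambda>X. Dp T p q X)"
  unfolding Dp_def conv_def bitsv_def
  by (intro CM_disj CM_ex CM_all CM_imp CM_conj CM_not CM_const CM_eq ev_Oq_CM map_coord_CM)

lemma meet_CM: "CM (\<lambda>X. meet T p q X)"
  unfolding meet_def
proof (intro CM_if CM_ex CM_conj CM_const Dp_CM)
  have "(\<lambda>X. LEAST i. sext q (from_nat i) \<and> Dp T p (from_nat i) X) \<in> measurable borel (count_space UNIV)"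
    by (rule measurable_Least) (intro CM_conj CM_const Dp_CM)
  then show "CM (\<lambda>X. from_nat (LEAST i. sext q (from_nat i) \<and> Dp T p (from_nat i) X))" by (rule CM_comp)
qed

lemma stage_CM: "CM (\<lambda>X. stage T X e)"
proof (induction e)
  case 0 then show ?case by (simp add: CM_const)
next
  case (Suc e)
  have "CM (\<lambda>X. (\<lambda>q X. meet T (from_nat e) (commit q) X) (stage T X e) X)"
    by (rule CM_app[OF _ Suc]) (rule meet_CM)
  then show ?case by (simp add: stage.simps(2))
qed

lemma hfun_coord_CM: "CM (\<lambda>X. hfun T X i)"
proof -
  have "CM (\<lambda>X. (\<lambda>q X. if prow i < length (ctau q ! pcol i) then ctau q ! pcol i ! prow i else X (pcol i) (prow i))
     (stage T X (Suc (pcol i))) X)"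
  proof (rule CM_app[OF _ stage_CM])
    fix q :: cnd
    show "CM (\<lambda>X. if prow i < length (ctau q ! pcol i) then ctau q ! pcol i ! prow i else X (pcol i) (prow i))"
      by (cases "prow i < length (ctau q ! pcol i)") (simp_all add: CM_const CM_coord)
  qed
  then show ?thesis unfolding hfun_def by simp
qed

instance bool :: second_countable_topology
proof
  show "\<exists>B::bool set set. countable B \<and> open = generate_topology B"
  proof (intro exI[of _ "Pow UNIV"] conjI)
    show "countable (Pow (UNIV :: bool set))" by simp
    show "open = generate_topology (Pow (UNIV :: bool set))"
    proof (intro ext iffI)
      fix S :: "bool set"
      show "generate_topology (Pow UNIV) S" by (rule generate_topology.Basis) simp
    next
      fix S :: "bool set" assume "generate_topology (Pow UNIV) S"
      show "open S" by (rule open_discrete)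
    qed
  qed
qed

lemma hfun_borel: "hfun T \<in> borel_measurable borel"
proof -
  have "(\<lambda>X. hfun T X i) \<in> borel_measurable borel" for i
    using hfun_coord_CM[of T i] measurable_cong_sets[OF refl sets_borel_eq_count_space] by blast
  then show ?thesis by (rule measurable_coordinatewise_then_product)
qed


theorem lemma2p7:
  fixes T :: "bool list set"
  assumes "perfect_tree T"
    and "turing_independent (paths T)"
  shows "\<exists>h :: (nat \<Rightarrow> nat \<Rightarrow> bool) \<Rightarrow> (nat \<Rightarrow> bool).
           h \<in> borel_measurable borel \<and>
           (\<forall>xs. (\<forall>n. xs n \<in> paths T) \<longrightarrow>
                 (\<forall>n. turing_le (xs n) (h xs)) \<and>
                 (\<forall>y \<in> paths T. y \<notin> range xs \<longrightarrow> \<not> turing_le y (h xs)))"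
proof (intro exI[of _ "hfun T"] conjI allI impI ballI)
  show "hfun T \<in> borel_measurable borel" by (rule hfun_borel)
next
  fix xs :: "nat \<Rightarrow> nat \<Rightarrow> bool" and n
  show "turing_le (xs n) (hfun T xs)" by (rule final_pos)
next
  fix xs :: "nat \<Rightarrow> nat \<Rightarrow> bool" and y
  assume XT: "\<forall>n. xs n \<in> paths T" and yT: "y \<in> paths T" and yr: "y \<notin> range xs"
  show "\<not> turing_le y (hfun T xs)"
  proof
    assume "turing_le y (hfun T xs)"
    then show False using final_neg[OF assms(2) XT yT yr] by blast
  qed
qed

end
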